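(* Let $(A,\mathfrak m)$ be a complete local Noetherian normal integral domain, and let $I_1,I_2,\dots$ be nonzero prime ideals of $A$ with $\lim_{n\to\infty}I_n=0$ in the $\mathfrak m$-adic topology. Set $P=\prod_n A/I_n$ and $S=\bigoplus_n A/I_n\subseteq P$, let $\iota\colon A\to P$, $\iota(a)=(a+I_1,a+I_2,\dots)$, and let $\pi\colon P\to P/S$ be the natural surjection. Then $\pi\circ\iota\colon A\to P/S$ is a split injection of $A$-modules.
   Context: $\lim_{n\to\infty}I_n=0$ in the $\mathfrak m$-adic topology means: for every $i\ge1$ there is $n_i$ such that $I_n\subseteq\mathfrak m^i$ for all $n\ge n_i$. *)

theory Defs
  imports "HOL-Computational_Algebra.Polynomial" "HOL-Computational_Algebra.Fraction_Field"
begin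

definition is_ideal :: "'a::comm_ring_1 set \<Rightarrow> bool" where
  "is_ideal I \<longleftrightarrow> 0 \<in> I \<and> (\<forall>x\<in>I. \<forall>y\<in>I. x + y \<in> I) \<and> (\<forall>r. \<forall>x\<in>I. r * x \<in> I)"

definition prime_ideal :: "'a::comm_ring_1 set \<Rightarrow> bool" where
  "prime_ideal P \<longleftrightarrow> is_ideal P \<and> P \<noteq> UNIV \<and> (\<forall>a b. a * b \<in> P \<longrightarrow> a \<in> P \<or> b \<in> P)"

definition maximal_ideal :: "'a::comm_ring_1 set \<Rightarrow> bool" where
  "maximal_ideal M \<longleftrightarrow> is_ideal M \<and> M \<noteq> UNIV \<and>
     (\<forall>J. is_ideal J \<and> M \<subseteq> J \<longrightarrow> J = M \<or> J = UNIV)"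

definition ideal_gen :: "'a::comm_ring_1 set \<Rightarrow> 'a set" where
  "ideal_gen S = \<Inter>{J. is_ideal J \<and> S \<subseteq> J}"

fun ideal_pow :: "'a::comm_ring_1 set \<Rightarrow> nat \<Rightarrow> 'a set" where
  "ideal_pow M 0 = UNIV"
| "ideal_pow M (Suc i) = ideal_gen {x * y | x y. x \<in> M \<and> y \<in> ideal_pow M i}"

definition noetherian_ring :: "'a::comm_ring_1 itself \<Rightarrow> bool" where
  "noetherian_ring _ \<longleftrightarrow> (\<forall>I::'a set. is_ideal I \<longrightarrow> (\<exists>F. finite F \<and> I = ideal_gen F))"

definition local_ring_max :: "'a::comm_ring_1 set \<Rightarrow> bool" where
  "local_ring_max M \<longleftrightarrow> maximal_ideal M \<and> (\<forall>J. maximal_ideal J \<longrightarrow> J = M)"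

definition adically_complete :: "'a::comm_ring_1 set \<Rightarrow> bool" where
  "adically_complete M \<longleftrightarrow>
     (\<Inter>i. ideal_pow M i) = {0} \<and>
     (\<forall>x::nat \<Rightarrow> 'a. (\<forall>i. \<exists>N. \<forall>p\<ge>N. \<forall>q\<ge>N. x p - x q \<in> ideal_pow M i) \<longrightarrow>
        (\<exists>L. \<forall>i. \<exists>N. \<forall>n\<ge>N. x n - L \<in> ideal_pow M i))"

definition normal_domain :: "'a::idom itself \<Rightarrow> bool" where
  "normal_domain _ \<longleftrightarrow>
     (\<forall>z::'a fract. (\<exists>p::'a poly. lead_coeff p = 1 \<and> poly (map_poly (\<lambda>a. Fract a 1) p) z = 0)
        \<longrightarrow> (\<exists>a. z = Fract a 1))"

end

theory Submission
  imports Defs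
begin


section \<open>Ideal basics\<close>

lemma ideal_0: "is_ideal I \<Longrightarrow> 0 \<in> I" by (simp add: is_ideal_def)
lemma ideal_add: "is_ideal I \<Longrightarrow> x \<in> I \<Longrightarrow> y \<in> I \<Longrightarrow> x + y \<in> I" by (simp add: is_ideal_def)
lemma ideal_mult: "is_ideal I \<Longrightarrow> x \<in> I \<Longrightarrow> r * x \<in> I" by (simp add: is_ideal_def)
lemma ideal_mult2: "is_ideal I \<Longrightarrow> x \<in> I \<Longrightarrow> x * r \<in> I" by (metis ideal_mult mult.commute)
lemma ideal_neg: "is_ideal I \<Longrightarrow> x \<in> I \<Longrightarrow> - x \<in> I"
  using ideal_mult[of I x "-1"] by simp
lemma ideal_diff: "is_ideal I \<Longrightarrow> x \<in> I \<Longrightarrow> y \<in> I \<Longrightarrow> x - y \<in> I"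
  using ideal_add[of I x "-y"] ideal_neg[of I y] by simp
lemma ideal_UNIV: "is_ideal UNIV" by (simp add: is_ideal_def)
lemma ideal_Int: "is_ideal I \<Longrightarrow> is_ideal J \<Longrightarrow> is_ideal (I \<inter> J)" by (simp add: is_ideal_def)
lemma ideal_one: "is_ideal I \<Longrightarrow> 1 \<in> I \<Longrightarrow> I = UNIV"
  using ideal_mult[of I 1] by auto
lemma ideal_sum: assumes "is_ideal I" shows "finite S \<Longrightarrow> (\<forall>x\<in>S. f x \<in> I) \<Longrightarrow> sum f S \<in> I"
  by (induction S rule: finite_induct) (auto intro: ideal_add ideal_0 assms)

lemma ideal_gen_ideal: "is_ideal (ideal_gen S)"
  unfolding ideal_gen_def is_ideal_def by auto
lemma ideal_gen_sub: "S \<subseteq> ideal_gen S"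
  unfolding ideal_gen_def by auto
lemma ideal_gen_least: "is_ideal J \<Longrightarrow> S \<subseteq> J \<Longrightarrow> ideal_gen S \<subseteq> J"
  unfolding ideal_gen_def by auto
lemma ideal_gen_mono: "S \<subseteq> T \<Longrightarrow> ideal_gen S \<subseteq> ideal_gen T"
  by (meson ideal_gen_ideal ideal_gen_least ideal_gen_sub order_trans)

lemma ideal_pow_ideal: "is_ideal (ideal_pow M i)"
  by (cases i) (auto simp: ideal_UNIV ideal_gen_ideal)

lemma ideal_pow_Suc_sub: "ideal_pow M (Suc i) \<subseteq> ideal_pow M i"
proof (induction i)
  case 0 then show ?case by simp
next
  case (Suc i)
  have e1: "ideal_pow M (Suc (Suc i)) = ideal_gen {x*y |x y. x\<in>M \<and> y \<in> ideal_pow M (Suc i)}" by simp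
  have e2: "ideal_pow M (Suc i) = ideal_gen {x*y |x y. x\<in>M \<and> y \<in> ideal_pow M i}" by simp
  have "{x*y |x y. x\<in>M \<and> y \<in> ideal_pow M (Suc i)} \<subseteq> {x*y |x y. x\<in>M \<and> y \<in> ideal_pow M i}"
    using Suc by blast
  from ideal_gen_mono[OF this] show ?case by (simp only: e1 e2[symmetric])
qed

lemma ideal_pow_anti: "j \<le> i \<Longrightarrow> ideal_pow M i \<subseteq> ideal_pow M j"
  by (induction i rule: dec_induct) (use ideal_pow_Suc_sub in blast)+

lemma ideal_pow_mult: "x \<in> M \<Longrightarrow> y \<in> ideal_pow M i \<Longrightarrow> x * y \<in> ideal_pow M (Suc i)"
  using ideal_gen_sub by fastforce

lemma ideal_pow_1: "is_ideal M \<Longrightarrow> ideal_pow M 1 = M"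
proof
  assume M: "is_ideal M"
  show "ideal_pow M 1 \<subseteq> M" unfolding One_nat_def ideal_pow.simps
    by (rule ideal_gen_least[OF M]) (auto intro: ideal_mult2[OF M])
  show "M \<subseteq> ideal_pow M 1"
  proof
    fix x assume "x \<in> M" then show "x \<in> ideal_pow M 1"
      using ideal_pow_mult[of x M 1 0] by simp
  qed
qed

definition sumI :: "'a::comm_ring_1 set \<Rightarrow> 'a set \<Rightarrow> 'a set" where
  "sumI A B = {a + b | a b. a \<in> A \<and> b \<in> B}"

lemma sumI_ideal: assumes A: "is_ideal A" and B: "is_ideal B" shows "is_ideal (sumI A B)"
  unfolding is_ideal_def
proof (intro conjI ballI allI)
  show "0 \<in> sumI A B" unfolding sumI_def
    by (rule CollectI, rule exI[of _ 0], rule exI[of _ 0]) (simp add: A B ideal_0)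
next
  fix x y assume "x \<in> sumI A B" "y \<in> sumI A B"
  then obtain a b a' b' where ab: "x = a + b" "a \<in> A" "b \<in> B" "y = a' + b'" "a' \<in> A" "b' \<in> B"
    unfolding sumI_def by blast
  show "x + y \<in> sumI A B" unfolding sumI_def
    by (rule CollectI, rule exI[of _ "a+a'"], rule exI[of _ "b+b'"]) (simp add: ab A B ideal_add ac_simps)
next
  fix r x assume "x \<in> sumI A B"
  then obtain a b where ab: "x = a + b" "a \<in> A" "b \<in> B" unfolding sumI_def by blast
  show "r * x \<in> sumI A B" unfolding sumI_def
    by (rule CollectI, rule exI[of _ "r*a"], rule exI[of _ "r*b"]) (simp add: ab A B ideal_mult distrib_left)
qed

lemma sumI_left: "is_ideal B \<Longrightarrow> A \<subseteq> sumI A B"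
  unfolding sumI_def using ideal_0 by force
lemma sumI_right: "is_ideal A \<Longrightarrow> B \<subseteq> sumI A B"
  unfolding sumI_def using ideal_0 by force
lemma sumI_least: "is_ideal C \<Longrightarrow> A \<subseteq> C \<Longrightarrow> B \<subseteq> C \<Longrightarrow> sumI A B \<subseteq> C"
  unfolding sumI_def using ideal_add by blast
lemma sumI_mono: "A \<subseteq> A' \<Longrightarrow> B \<subseteq> B' \<Longrightarrow> sumI A B \<subseteq> sumI A' B'"
  unfolding sumI_def by blast

section \<open>Local rings\<close>

lemma exists_maximal:
  assumes J: "is_ideal J" "J \<noteq> UNIV"
  shows "\<exists>P. maximal_ideal P \<and> J \<subseteq> P"
proof -
  let ?A = "{P. is_ideal P \<and> 1 \<notin> P \<and> J \<subseteq> P}"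
  have J1: "1 \<notin> J"
  proof
    assume "1 \<in> J" then have "J = UNIV" by (rule ideal_one[OF J(1)])
    with J(2) show False by simp
  qed
  have JA: "J \<in> ?A" using J(1) J1 by simp
  have "\<forall>C\<in>chains ?A. \<exists>U\<in>?A. \<forall>X\<in>C. X \<subseteq> U"
  proof
    fix C assume C: "C \<in> chains ?A"
    show "\<exists>U\<in>?A. \<forall>X\<in>C. X \<subseteq> U"
    proof (cases "C = {}")
      case True
      show ?thesis
      proof (rule bexI[of _ J])
        show "J \<in> ?A" by (rule JA)
        show "\<forall>X\<in>C. X \<subseteq> J" using True by simp
      qed
    next
      case False
      then obtain X0 where X0: "X0 \<in> C" by blast
      have ch: "\<And>X Y. X \<in> C \<Longrightarrow> Y \<in> C \<Longrightarrow> X \<subseteq> Y \<or> Y \<subseteq> X"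
        using C unfolding chains_def chain_subset_def by simp
      have sub: "\<And>X. X \<in> C \<Longrightarrow> is_ideal X \<and> 1 \<notin> X \<and> J \<subseteq> X"
        using C unfolding chains_def by auto
      have idC: "\<And>X. X \<in> C \<Longrightarrow> is_ideal X" using sub by simp
      have "is_ideal (\<Union>C)"
        unfolding is_ideal_def
      proof (intro conjI ballI allI)
        have "0 \<in> X0" using idC[OF X0] by (rule ideal_0)
        then show "0 \<in> \<Union>C" using X0 by (rule UnionI[rotated])
      next
        fix x y assume "x \<in> \<Union>C" "y \<in> \<Union>C"
        then obtain X Y where XY: "x \<in> X" "y \<in> Y" "X \<in> C" "Y \<in> C" by (elim UnionE)
        show "x + y \<in> \<Union>C"
        proof (cases "X \<subseteq> Y")
          case True
          then have "x + y \<in> Y" using ideal_add[OF idC[OF XY(4)]] XY by (simp add: subset_iff)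
          then show ?thesis using XY(4) by (rule UnionI[rotated])
        next
          case False
          then have "Y \<subseteq> X" using ch[OF XY(3,4)] by simp
          then have "x + y \<in> X" using ideal_add[OF idC[OF XY(3)]] XY by (simp add: subset_iff)
          then show ?thesis using XY(3) by (rule UnionI[rotated])
        qed
      next
        fix r x assume "x \<in> \<Union>C"
        then obtain X where X: "x \<in> X" "X \<in> C" by (elim UnionE)
        then have "r * x \<in> X" using ideal_mult[OF idC[OF X(2)]] by simp
        then show "r * x \<in> \<Union>C" using X(2) by (rule UnionI[rotated])
      qed
      moreover have "1 \<notin> \<Union>C" using sub by auto
      moreover have "J \<subseteq> \<Union>C" using sub[OF X0] X0 by auto
      ultimately have UA: "\<Union>C \<in> ?A" by simp
      show ?thesis
      proof (rule bexI[OF _ UA])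
        show "\<forall>X\<in>C. X \<subseteq> \<Union>C" by auto
      qed
    qed
  qed
  from Zorn_Lemma2[OF this] obtain P where P1: "P \<in> ?A" and P2: "\<forall>X\<in>?A. P \<subseteq> X \<longrightarrow> X = P" ..
  have Pp: "is_ideal P" "1 \<notin> P" "J \<subseteq> P" using P1 by simp_all
  have "maximal_ideal P"
    unfolding maximal_ideal_def
  proof (intro conjI allI impI)
    show "is_ideal P" by (rule Pp(1))
    show "P \<noteq> UNIV" using Pp(2) by auto
    fix K assume K: "is_ideal K \<and> P \<subseteq> K"
    then have K1: "is_ideal K" and PK: "P \<subseteq> K" by simp_all
    show "K = P \<or> K = UNIV"
    proof (cases "1 \<in> K")
      case True
      have "K = UNIV" by (rule ideal_one[OF K1 True])
      then show ?thesis by simp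
    next
      case False
      have "J \<subseteq> K" using Pp(3) PK by (rule order_trans)
      then have KA: "K \<in> ?A" using K1 False by simp
      have "K = P" by (rule P2[rule_format, OF KA PK])
      then show ?thesis by simp
    qed
  qed
  then show ?thesis using Pp(3) by auto
qed

lemma local_unit:
  assumes loc: "local_ring_max M" and x: "x \<notin> M"
  shows "\<exists>y. y * x = 1"
proof -
  have mx: "maximal_ideal M" using loc unfolding local_ring_max_def by (rule conjunct1)
  have M1: "is_ideal M" using mx unfolding maximal_ideal_def by (rule conjunct1)
  have M2: "M \<noteq> UNIV" using mx unfolding maximal_ideal_def by simp
  have M3: "\<And>J. is_ideal J \<Longrightarrow> M \<subseteq> J \<Longrightarrow> J = M \<or> J = UNIV"
    using mx unfolding maximal_ideal_def by simp
  note M = M1 M2 M3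
  let ?L = "{m + r * x | m r. m \<in> M}"
  have L: "is_ideal ?L" unfolding is_ideal_def
  proof (intro conjI ballI allI)
    show "0 \<in> ?L" by (rule CollectI, rule exI[of _ 0], rule exI[of _ 0]) (simp add: M ideal_0)
  next
    fix a b assume "a \<in> ?L" "b \<in> ?L"
    then obtain m r m' r' where ab: "a = m + r*x" "m\<in>M" "b = m'+r'*x" "m'\<in>M" by blast
    show "a + b \<in> ?L"
      by (rule CollectI, rule exI[of _ "m+m'"], rule exI[of _ "r+r'"]) (use ab in \<open>simp add: algebra_simps M ideal_add\<close>)
  next
    fix s a assume "a \<in> ?L"
    then obtain m r where ab: "a = m + r*x" "m\<in>M" by blast
    show "s * a \<in> ?L"
      by (rule CollectI, rule exI[of _ "s*m"], rule exI[of _ "s*r"]) (use ab in \<open>simp add: algebra_simps M ideal_mult2\<close>)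
  qed
  have MsubL: "M \<subseteq> ?L"
  proof
    fix m assume mM: "m \<in> M" show "m \<in> ?L" by (rule CollectI, rule exI[of _ m], rule exI[of _ 0]) (simp add: mM)
  qed
  have xL: "x \<in> ?L" by (rule CollectI, rule exI[of _ 0], rule exI[of _ 1]) (simp add: M ideal_0)
  have disj: "?L = M \<or> ?L = UNIV" by (rule M(3)[OF L MsubL])
  have nM: "?L \<noteq> M"
  proof
    assume e: "?L = M"
    have "x \<in> M" using xL unfolding e .
    with x show False by simp
  qed
  from disj nM have "?L = UNIV" by (elim disjE) simp_all
  then have "1 \<in> ?L" by simp
  then obtain m r where mr: "m \<in> M" "1 = m + r * x" by blast
  let ?U = "{(1 - m) * s | s. True}"
  have U: "is_ideal ?U" unfolding is_ideal_def
  proof (intro conjI ballI allI)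
    show "0 \<in> ?U" by (rule CollectI, rule exI[of _ 0]) simp
  next
    fix a b assume "a \<in> ?U" "b \<in> ?U"
    then obtain s s' where ab: "a = (1-m)*s" "b = (1-m)*s'" by blast
    show "a + b \<in> ?U"
      by (rule CollectI, rule exI[of _ "s+s'"]) (simp add: ab distrib_left)
  next
    fix t a assume "a \<in> ?U"
    then obtain s where ab: "a = (1-m)*s" by blast
    show "t * a \<in> ?U"
      by (rule CollectI, rule exI[of _ "t*s"]) (simp add: ab mult.left_commute)
  qed
  have "?U = UNIV"
  proof (rule ccontr)
    assume nU: "?U \<noteq> UNIV"
    obtain P where P: "maximal_ideal P" "?U \<subseteq> P" using exists_maximal[OF U nU] by blast
    have "\<forall>J. maximal_ideal J \<longrightarrow> J = M" using loc by (simp add: local_ring_max_def)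
    then have "P = M" using P(1) by blast
    have "1 - m \<in> ?U" by (rule CollectI, rule exI[of _ 1]) simp
    then have "1 - m \<in> P" using P(2) by (rule rev_subsetD)
    then have "1 - m \<in> M" unfolding \<open>P = M\<close> .
    then have "(1 - m) + m \<in> M" by (rule ideal_add[OF M(1) _ mr(1)])
    then have "1 \<in> M" by simp
    then have "M = UNIV" by (rule ideal_one[OF M(1)])
    with M(2) show False by simp
  qed
  then have "1 \<in> ?U" by simp
  then obtain s where s: "1 = (1 - m) * s" by blast
  have e: "r * x = 1 - m" using mr(2) by (simp add: eq_diff_eq add.commute)
  have "(r*s)*x = (r*x)*s" by (simp add: ac_simps)
  also have "\<dots> = (1-m)*s" by (simp only: e)
  also have "\<dots> = 1" by (rule s[symmetric])
  finally have "(r*s)*x = 1" .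
  then show ?thesis by blast
qed




lemma chain_anti: "(\<And>j. N (Suc j) \<subseteq> N j) \<Longrightarrow> j \<le> j' \<Longrightarrow> N j' \<subseteq> N j"
  by (rule lift_Suc_antimono_le)

lemma modular_stab:
  assumes N: "\<And>j. is_ideal (N j)" "\<And>j. N (Suc j) \<subseteq> N j" and X: "is_ideal X"
    and s1: "\<And>j. j \<ge> k1 \<Longrightarrow> sumI (N j) X = sumI (N k1) X"
    and s2: "\<And>j. j \<ge> k2 \<Longrightarrow> N j \<inter> X = N k2 \<inter> X"
  shows "\<exists>k. \<forall>j\<ge>k. N j = N k"
proof (intro exI allI impI)
  let ?k = "max k1 k2"
  fix j assume j: "j \<ge> ?k"
  show "N j = N ?k"
  proof
    show "N j \<subseteq> N ?k" using chain_anti[of N, OF N(2) j] .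
    show "N ?k \<subseteq> N j"
    proof
      fix x assume x: "x \<in> N ?k"
      have "x \<in> sumI (N ?k) X" using x sumI_left[OF X] by blast
      also have "\<dots> = sumI (N k1) X" by (rule s1) simp
      also have "\<dots> = sumI (N j) X" using j by (intro s1[symmetric]) simp
      finally obtain n v where nv: "x = n + v" "n \<in> N j" "v \<in> X" unfolding sumI_def by blast
      have "N j \<subseteq> N ?k" using chain_anti[of N, OF N(2) j] .
      then have "n \<in> N ?k" using nv(2) by blast
      then have "v \<in> N ?k" using ideal_diff[OF N(1) x] nv(1) by (metis add_diff_cancel_left')
      then have "v \<in> N ?k \<inter> X" using nv(3) by simp
      also have "\<dots> = N k2 \<inter> X" by (rule s2) simp
      also have "\<dots> = N j \<inter> X" using j by (intro s2[symmetric]) simp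
      finally have "v \<in> N j" by simp
      then show "x \<in> N j" using nv ideal_add[OF N(1)] by simp
    qed
  qed
qed

lemma gen_single: "u \<in> ideal_gen {g} \<Longrightarrow> \<exists>r. u = r * g"
proof -
  assume u: "u \<in> ideal_gen {g}"
  let ?P = "{r * g | r. True}"
  have "is_ideal ?P" unfolding is_ideal_def
  proof (intro conjI ballI allI)
    show "0 \<in> ?P" by (rule CollectI, rule exI[of _ 0]) simp
  next
    fix a b assume "a \<in> ?P" "b \<in> ?P"
    then obtain s s' where ab: "a = s * g" "b = s' * g" by blast
    show "a + b \<in> ?P" by (rule CollectI, rule exI[of _ "s+s'"]) (simp add: ab distrib_right)
  next
    fix t a assume "a \<in> ?P"
    then obtain s where ab: "a = s * g" by blast
    show "t * a \<in> ?P" by (rule CollectI, rule exI[of _ "t*s"]) (simp add: ab mult.assoc)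
  qed
  moreover have "g \<in> ?P" by (rule CollectI, rule exI[of _ 1]) simp
  ultimately have "ideal_gen {g} \<subseteq> ?P" by (intro ideal_gen_least) simp_all
  then show ?thesis using u by blast
qed

lemma dcc_rel:
  assumes loc: "local_ring_max M"
  shows "finite F \<Longrightarrow> is_ideal W \<Longrightarrow> is_ideal V \<Longrightarrow> W \<subseteq> V \<Longrightarrow> F \<subseteq> V \<Longrightarrow> V \<subseteq> sumI W (ideal_gen F)
    \<Longrightarrow> (\<forall>m\<in>M. \<forall>v\<in>V. m * v \<in> W)
    \<Longrightarrow> (\<forall>j. is_ideal (N j) \<and> W \<subseteq> N j \<and> N j \<subseteq> V \<and> N (Suc j) \<subseteq> N j)
    \<Longrightarrow> \<exists>k. \<forall>j\<ge>k. N j = N k"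
proof (induction F arbitrary: V N rule: finite_induct)
  case empty
  have "ideal_gen {} \<subseteq> W" using empty(1) by (intro ideal_gen_least) simp_all
  then have "sumI W (ideal_gen {}) \<subseteq> W" using empty(1) by (intro sumI_least) simp_all
  then have "\<And>j. N j = W" using empty by blast
  then show ?case by simp
next
  case (insert g F)
  let ?V' = "sumI W (ideal_gen F)"
  have V'id: "is_ideal ?V'" by (rule sumI_ideal[OF insert(4) ideal_gen_ideal])
  have WV': "W \<subseteq> ?V'" by (rule sumI_left[OF ideal_gen_ideal])
  have FV': "F \<subseteq> ?V'" using ideal_gen_sub sumI_right[OF insert(4), of "ideal_gen F"] by blast
  have genV: "ideal_gen F \<subseteq> V" using insert(5,7) by (intro ideal_gen_least) simp_all
  have V'V: "?V' \<subseteq> V" using insert(6) genV insert(5) by (intro sumI_least) simp_all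
  have gV: "g \<in> V" using insert(7) by simp
  have MV': "\<forall>m\<in>M. \<forall>v\<in>?V'. m * v \<in> W" using insert(9) V'V by blast
  have "\<exists>k. \<forall>j\<ge>k. N j \<inter> ?V' = N k \<inter> ?V'"
  proof (rule insert.IH[OF insert(4) V'id WV' FV' subset_refl MV'])
    show "\<forall>j. is_ideal (N j \<inter> ?V') \<and> W \<subseteq> N j \<inter> ?V' \<and> N j \<inter> ?V' \<subseteq> ?V' \<and>
       N (Suc j) \<inter> ?V' \<subseteq> N j \<inter> ?V'"
      using insert(10) WV' V'id ideal_Int by blast
  qed
  then obtain k2 where k2: "\<And>j. j \<ge> k2 \<Longrightarrow> N j \<inter> ?V' = N k2 \<inter> ?V'" by blast
  have Nid: "\<And>j. is_ideal (N j)" and NV: "\<And>j. N j \<subseteq> V" and Nd: "\<And>j. N (Suc j) \<subseteq> N j"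
    using insert(10) by simp_all
  have decomp: "\<And>v. v \<in> V \<Longrightarrow> \<exists>v'\<in>?V'. \<exists>r. v = v' + r * g"
  proof -
    fix v assume v: "v \<in> V"
    have "ideal_gen (insert g F) \<subseteq> sumI (ideal_gen F) (ideal_gen {g})"
    proof (rule ideal_gen_least[OF sumI_ideal[OF ideal_gen_ideal ideal_gen_ideal]])
      have "g \<in> sumI (ideal_gen F) (ideal_gen {g})"
        using sumI_right[OF ideal_gen_ideal, of "ideal_gen {g}" F] ideal_gen_sub[of "{g}"] by blast
      moreover have "F \<subseteq> sumI (ideal_gen F) (ideal_gen {g})"
        using sumI_left[OF ideal_gen_ideal, of "ideal_gen F" "{g}"] ideal_gen_sub[of F] by blast
      ultimately show "insert g F \<subseteq> sumI (ideal_gen F) (ideal_gen {g})" by blast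
    qed
    moreover have "v \<in> sumI W (ideal_gen (insert g F))" using insert(8) v by blast
    ultimately obtain w t u where wtu: "v = w + (t + u)" "w \<in> W" "t \<in> ideal_gen F" "u \<in> ideal_gen {g}"
      unfolding sumI_def by blast
    obtain r where r: "u = r * g" using gen_single[OF wtu(4)] by blast
    have "w + t \<in> ?V'" unfolding sumI_def using wtu by blast
    moreover have "v = (w + t) + r * g" using wtu(1) r by (simp add: ac_simps)
    ultimately show "\<exists>v'\<in>?V'. \<exists>r. v = v' + r * g" by blast
  qed
  let ?P = "\<lambda>j. g \<in> sumI (N j) ?V'"
  have SV: "\<And>j. sumI (N j) ?V' \<subseteq> V" by (rule sumI_least[OF insert(5) NV V'V])
  have caseT: "\<And>j. ?P j \<Longrightarrow> sumI (N j) ?V' = V"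
  proof -
    fix j assume Pj: "?P j"
    then obtain n v'' where nv: "g = n + v''" "n \<in> N j" "v'' \<in> ?V'" unfolding sumI_def by blast
    have "V \<subseteq> sumI (N j) ?V'"
    proof
      fix v assume "v \<in> V"
      then obtain v' r where vr: "v' \<in> ?V'" "v = v' + r * g" using decomp by blast
      have "r * n \<in> N j" using ideal_mult[OF Nid nv(2)] .
      moreover have "v' + r * v'' \<in> ?V'" using ideal_add[OF V'id vr(1) ideal_mult[OF V'id nv(3)]] .
      moreover have "v = r * n + (v' + r * v'')" using vr(2) nv(1) by (simp add: algebra_simps)
      ultimately show "v \<in> sumI (N j) ?V'" unfolding sumI_def by blast
    qed
    then show "sumI (N j) ?V' = V" using SV by (intro equalityI)
  qed
  have caseF: "\<And>j. \<not> ?P j \<Longrightarrow> sumI (N j) ?V' = ?V'"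
  proof -
    fix j assume nP: "\<not> ?P j"
    have "N j \<subseteq> ?V'"
    proof
      fix n assume n: "n \<in> N j"
      then have "n \<in> V" using NV by blast
      then obtain v' r where vr: "v' \<in> ?V'" "n = v' + r * g" using decomp by blast
      show "n \<in> ?V'"
      proof (cases "r \<in> M")
        case True
        then have "r * g \<in> W" using insert(9) gV by blast
        then have "r * g \<in> ?V'" using WV' by blast
        then show ?thesis using vr ideal_add[OF V'id] by simp
      next
        case False
        then obtain u where u: "u * r = 1" using local_unit[OF loc] by blast
        have "g = u * n + (- (u * v'))" using vr(2) u
          by (simp add: algebra_simps)
        moreover have "u * n \<in> N j" using ideal_mult[OF Nid n] .
        moreover have "- (u * v') \<in> ?V'" using ideal_neg[OF V'id ideal_mult[OF V'id vr(1)]] .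
        ultimately have "?P j" unfolding sumI_def by blast
        then show ?thesis using nP by simp
      qed
    qed
    then have "sumI (N j) ?V' \<subseteq> ?V'" by (rule sumI_least[OF V'id _ subset_refl])
    then show "sumI (N j) ?V' = ?V'" using sumI_right[OF Nid, of ?V' j] by (intro equalityI)
  qed
  have Pmono: "\<And>j j'. j \<le> j' \<Longrightarrow> ?P j' \<Longrightarrow> ?P j"
  proof -
    fix j j' assume "j \<le> j'" "?P j'"
    then have "N j' \<subseteq> N j" using chain_anti[of N, OF Nd] by blast
    then have "sumI (N j') ?V' \<subseteq> sumI (N j) ?V'" by (intro sumI_mono) simp_all
    then show "?P j" using \<open>?P j'\<close> by blast
  qed
  obtain k1 where k1: "\<And>j. j \<ge> k1 \<Longrightarrow> ?P j = ?P k1"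
  proof (cases "\<exists>j0. \<not> ?P j0")
    case True
    then obtain j0 where "\<not> ?P j0" by blast
    then have "\<And>j. j \<ge> j0 \<Longrightarrow> ?P j = ?P j0" using Pmono by blast
    then show thesis by (rule that)
  next
    case False
    then have "\<And>j. j \<ge> 0 \<Longrightarrow> ?P j = ?P 0" by simp
    then show thesis by (rule that)
  qed
  have s1: "\<And>j. j \<ge> k1 \<Longrightarrow> sumI (N j) ?V' = sumI (N k1) ?V'"
  proof -
    fix j assume "j \<ge> k1"
    then have e: "?P j = ?P k1" by (rule k1)
    show "sumI (N j) ?V' = sumI (N k1) ?V'"
    proof (cases "?P k1")
      case True
      then have "?P j" using e by simp
      then show ?thesis using caseT[of j] caseT[of k1] True by simp
    next
      case False
      then have "\<not> ?P j" using e by simp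
      then show ?thesis using caseF[of j] caseF[of k1] False by simp
    qed
  qed
  show ?case by (rule modular_stab[OF Nid Nd V'id s1 k2])
qed

lemma dcc_pow:
  assumes noeth: "noetherian_ring TYPE('a::idom)" and loc: "local_ring_max (M::'a set)"
  shows "\<forall>N. (\<forall>j. is_ideal (N j) \<and> ideal_pow M i \<subseteq> N j \<and> N (Suc j) \<subseteq> N j) \<longrightarrow> (\<exists>k. \<forall>j\<ge>k. N j = N k)"
proof (induction i)
  case 0
  show ?case
  proof (intro allI impI)
    fix N :: "nat \<Rightarrow> 'a set" assume "\<forall>j. is_ideal (N j) \<and> ideal_pow M 0 \<subseteq> N j \<and> N (Suc j) \<subseteq> N j"
    then have "\<And>j. N j = UNIV" by auto
    then show "\<exists>k. \<forall>j\<ge>k. N j = N k" by simp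
  qed
next
  case (Suc i)
  show ?case
  proof (intro allI impI)
    fix N :: "nat \<Rightarrow> 'a set"
    assume N: "\<forall>j. is_ideal (N j) \<and> ideal_pow M (Suc i) \<subseteq> N j \<and> N (Suc j) \<subseteq> N j"
    have Nid: "\<And>j. is_ideal (N j)" and Nsub: "\<And>j. ideal_pow M (Suc i) \<subseteq> N j"
      and Nd: "\<And>j. N (Suc j) \<subseteq> N j" using N by simp_all
    let ?X = "ideal_pow M i"
    have Xid: "is_ideal ?X" by (rule ideal_pow_ideal)
    have h: "\<forall>j. is_ideal (sumI (N j) ?X) \<and> ?X \<subseteq> sumI (N j) ?X \<and> sumI (N (Suc j)) ?X \<subseteq> sumI (N j) ?X"
        using sumI_ideal[OF Nid Xid] sumI_right[OF Nid] sumI_mono[OF Nd subset_refl] by blast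
    have "\<exists>k. \<forall>j\<ge>k. sumI (N j) ?X = sumI (N k) ?X" using spec[OF Suc.IH, of "\<lambda>j. sumI (N j) ?X"] h by simp
    then obtain k1 where k1: "\<And>j. j \<ge> k1 \<Longrightarrow> sumI (N j) ?X = sumI (N k1) ?X" by blast
    obtain F where F: "finite F" "?X = ideal_gen F"
      using noeth Xid unfolding noetherian_ring_def by blast
    have "\<exists>k. \<forall>j\<ge>k. N j \<inter> ?X = N k \<inter> ?X"
    proof (rule dcc_rel[OF loc F(1) ideal_pow_ideal Xid ideal_pow_Suc_sub])
      show "F \<subseteq> ?X" using F(2) ideal_gen_sub by blast
      show "?X \<subseteq> sumI (ideal_pow M (Suc i)) (ideal_gen F)"
        using sumI_right[OF ideal_pow_ideal, of "ideal_gen F" M "Suc i"] F(2) by simp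
      show "\<forall>m\<in>M. \<forall>v\<in>?X. m * v \<in> ideal_pow M (Suc i)" using ideal_pow_mult by blast
      show "\<forall>j. is_ideal (N j \<inter> ?X) \<and> ideal_pow M (Suc i) \<subseteq> N j \<inter> ?X \<and> N j \<inter> ?X \<subseteq> ?X \<and>
          N (Suc j) \<inter> ?X \<subseteq> N j \<inter> ?X"
        using Nid Xid ideal_Int Nsub ideal_pow_Suc_sub[of M i] Nd by blast
    qed
    then obtain k2 where k2: "\<And>j. j \<ge> k2 \<Longrightarrow> N j \<inter> ?X = N k2 \<inter> ?X" by blast
    show "\<exists>k. \<forall>j\<ge>k. N j = N k" by (rule modular_stab[OF Nid Nd Xid k1 k2])
  qed
qed




definition cos :: "'a::comm_ring_1 \<Rightarrow> 'a set \<Rightarrow> 'a set" where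
  "cos c J = {x. x - c \<in> J}"

definition plusI :: "'a::comm_ring_1 set \<Rightarrow> 'a set \<Rightarrow> 'a set" where
  "plusI X J = {x. \<exists>y\<in>X. x - y \<in> J}"

definition isCos :: "'a::comm_ring_1 set \<Rightarrow> nat \<Rightarrow> 'a set \<Rightarrow> bool" where
  "isCos M i Y \<longleftrightarrow> (\<exists>c J. is_ideal J \<and> ideal_pow M i \<subseteq> J \<and> Y = cos c J)"

lemma ideal_diff_eq: "is_ideal J \<Longrightarrow> a \<in> J \<Longrightarrow> b \<in> J \<Longrightarrow> a - b = e \<Longrightarrow> e \<in> J"
  using ideal_diff by blast
lemma ideal_add_eq: "is_ideal J \<Longrightarrow> a \<in> J \<Longrightarrow> b \<in> J \<Longrightarrow> a + b = e \<Longrightarrow> e \<in> J"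
  using ideal_add by blast

lemma cos_mem: "x \<in> cos c J \<longleftrightarrow> x - c \<in> J" by (simp add: cos_def)

lemma cos_eq: "is_ideal J \<Longrightarrow> c - d \<in> J \<Longrightarrow> cos c J = cos d J"
proof -
  assume J: "is_ideal J" and cd: "c - d \<in> J"
  show "cos c J = cos d J"
  proof (intro equalityI subsetI)
    fix x assume "x \<in> cos c J"
    then have h: "x - c \<in> J" by (simp add: cos_mem)
    have "(x - c) + (c - d) \<in> J" by (rule ideal_add[OF J h cd])
    moreover have "(x - c) + (c - d) = x - d" by simp
    ultimately show "x \<in> cos d J" by (simp add: cos_mem)
  next
    fix x assume "x \<in> cos d J"
    then have h: "x - d \<in> J" by (simp add: cos_mem)
    have "(x - d) - (c - d) \<in> J" by (rule ideal_diff[OF J h cd])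
    moreover have "(x - d) - (c - d) = x - c" by simp
    ultimately show "x \<in> cos c J" by (simp add: cos_mem)
  qed
qed

lemma plusI_mono: "X \<subseteq> X' \<Longrightarrow> L \<subseteq> L' \<Longrightarrow> plusI X L \<subseteq> plusI X' L'"
  unfolding plusI_def by blast

lemma plusI_sup: assumes L: "is_ideal L" shows "X \<subseteq> plusI X L"
proof
  fix x assume x: "x \<in> X"
  have "x - x \<in> L" using ideal_0[OF L] by simp
  then show "x \<in> plusI X L" unfolding plusI_def using x by blast
qed

lemma plusI_cos: assumes J: "is_ideal J" and L: "is_ideal L"
  shows "plusI (cos c J) L = cos c (sumI J L)"
proof (intro equalityI subsetI)
  fix x assume "x \<in> plusI (cos c J) L"
  then obtain y where y: "y - c \<in> J" "x - y \<in> L" unfolding plusI_def cos_def by blast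
  have "x - c = (y - c) + (x - y)" by simp
  then show "x \<in> cos c (sumI J L)" unfolding cos_mem sumI_def using y by blast
next
  fix x assume "x \<in> cos c (sumI J L)"
  then obtain a b where ab: "x - c = a + b" "a \<in> J" "b \<in> L" unfolding cos_mem sumI_def by blast
  have "(c + a) - c \<in> J" using ab by simp
  moreover have "x - (c + a) \<in> L" using ab by (metis add_diff_cancel_left' diff_diff_eq)
  ultimately show "x \<in> plusI (cos c J) L" unfolding plusI_def cos_def by blast
qed

lemma isCos_plusI: "isCos M k X \<Longrightarrow> isCos M i (plusI X (ideal_pow M i))"
proof -
  assume "isCos M k X"
  then obtain c J where cJ: "is_ideal J" "X = cos c J" unfolding isCos_def by blast
  have "plusI X (ideal_pow M i) = cos c (sumI J (ideal_pow M i))"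
    using plusI_cos[OF cJ(1) ideal_pow_ideal] cJ(2) by simp
  moreover have "is_ideal (sumI J (ideal_pow M i))" by (rule sumI_ideal[OF cJ(1) ideal_pow_ideal])
  moreover have "ideal_pow M i \<subseteq> sumI J (ideal_pow M i)" by (rule sumI_right[OF cJ(1)])
  ultimately show ?thesis unfolding isCos_def by blast
qed

lemma isCos_absorb: "isCos M i X \<Longrightarrow> plusI X (ideal_pow M i) = X"
proof -
  assume "isCos M i X"
  then obtain c J where cJ: "is_ideal J" "ideal_pow M i \<subseteq> J" "X = cos c J" unfolding isCos_def by blast
  show ?thesis
  proof (intro equalityI)
    show "plusI X (ideal_pow M i) \<subseteq> X"
    proof
      fix x assume "x \<in> plusI X (ideal_pow M i)"
      then obtain y where y: "y - c \<in> J" "x - y \<in> J" unfolding plusI_def cJ(3) cos_def using cJ(2) by blast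
      have "(x - y) + (y - c) \<in> J" by (rule ideal_add[OF cJ(1) y(2) y(1)])
      then show "x \<in> X" unfolding cJ(3) cos_mem by simp
    qed
    show "X \<subseteq> plusI X (ideal_pow M i)" by (rule plusI_sup[OF ideal_pow_ideal])
  qed
qed

lemma isCos_mono: "i \<le> i' \<Longrightarrow> isCos M i X \<Longrightarrow> isCos M i' X"
  unfolding isCos_def using ideal_pow_anti by blast

lemma isCos_UNIV: "isCos M 0 UNIV"
  unfolding isCos_def
  by (rule exI[of _ 0], rule exI[of _ UNIV]) (simp add: ideal_UNIV cos_def)

lemma isCos_Int: assumes X: "isCos M i X" and X': "isCos M i' X'" and ne: "x0 \<in> X \<inter> X'"
  shows "isCos M (max i i') (X \<inter> X')"
proof -
  obtain c J where cJ: "is_ideal J" "ideal_pow M i \<subseteq> J" "X = cos c J" using X unfolding isCos_def by blast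
  obtain c' J' where cJ': "is_ideal J'" "ideal_pow M i' \<subseteq> J'" "X' = cos c' J'" using X' unfolding isCos_def by blast
  have x0: "x0 - c \<in> J" "x0 - c' \<in> J'" using ne cJ(3) cJ'(3) by (simp_all add: cos_mem)
  have "X \<inter> X' = cos x0 (J \<inter> J')"
  proof (intro equalityI subsetI)
    fix x assume "x \<in> X \<inter> X'"
    then have h: "x - c \<in> J" "x - c' \<in> J'" using cJ(3) cJ'(3) by (simp_all add: cos_mem)
    have "x - x0 \<in> J" by (rule ideal_diff_eq[OF cJ(1) h(1) x0(1)]) simp
    moreover have "x - x0 \<in> J'" by (rule ideal_diff_eq[OF cJ'(1) h(2) x0(2)]) simp
    ultimately show "x \<in> cos x0 (J \<inter> J')" by (simp add: cos_mem)
  next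
    fix x assume "x \<in> cos x0 (J \<inter> J')"
    then have h: "x - x0 \<in> J" "x - x0 \<in> J'" by (simp_all add: cos_mem)
    have "x - c \<in> J" by (rule ideal_add_eq[OF cJ(1) h(1) x0(1)]) simp
    moreover have "x - c' \<in> J'" by (rule ideal_add_eq[OF cJ'(1) h(2) x0(2)]) simp
    ultimately show "x \<in> X \<inter> X'" using cJ(3) cJ'(3) by (simp add: cos_mem)
  qed
  moreover have "is_ideal (J \<inter> J')" by (rule ideal_Int[OF cJ(1) cJ'(1)])
  moreover have "ideal_pow M (max i i') \<subseteq> J \<inter> J'"
    using cJ(2) cJ'(2) ideal_pow_anti[of i "max i i'" M] ideal_pow_anti[of i' "max i i'" M] by auto
  ultimately show ?thesis unfolding isCos_def by blast
qed

locale cl =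
  fixes M :: "'a::idom set"
  assumes noeth: "noetherian_ring TYPE('a)" and loc: "local_ring_max M" and compl: "adically_complete M"
begin

lemma dcc_cos:
  assumes Y: "\<And>j. isCos M i (Y j)" "\<And>j. Y j \<noteq> {}" "\<And>j. Y (Suc j) \<subseteq> Y j"
  shows "\<exists>k. \<forall>j\<ge>k. Y j = Y k"
proof -
  have "\<forall>j. \<exists>p. is_ideal (snd p) \<and> ideal_pow M i \<subseteq> snd p \<and> Y j = cos (fst p) (snd p)"
    using Y(1) unfolding isCos_def by simp
  from choice[OF this] obtain p where p: "\<forall>j. is_ideal (snd (p j)) \<and> ideal_pow M i \<subseteq> snd (p j) \<and> Y j = cos (fst (p j)) (snd (p j))" ..
  define c where "c = (\<lambda>j. fst (p j))"
  define J where "J = (\<lambda>j. snd (p j))"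
  have J1: "\<And>j. is_ideal (J j)" and J2: "\<And>j. ideal_pow M i \<subseteq> J j" and Yc: "\<And>j. Y j = cos (c j) (J j)"
    using p unfolding c_def J_def by simp_all
  have cY: "\<And>j. c j \<in> Y j" using Yc ideal_0[OF J1] by (simp add: cos_mem)
  have Jd: "\<And>j. J (Suc j) \<subseteq> J j"
  proof
    fix j u assume u: "u \<in> J (Suc j)"
    have "c (Suc j) + u \<in> Y (Suc j)" unfolding Yc[of "Suc j"] cos_mem using u by simp
    then have "c (Suc j) + u \<in> Y j" using Y(3)[of j] by blast
    then have a: "c (Suc j) + u - c j \<in> J j" unfolding Yc[of j] cos_mem .
    have "c (Suc j) \<in> Y j" using cY[of "Suc j"] Y(3)[of j] by blast
    then have b: "c (Suc j) - c j \<in> J j" unfolding Yc[of j] cos_mem .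
    have "(c (Suc j) + u - c j) - (c (Suc j) - c j) \<in> J j" by (rule ideal_diff[OF J1 a b])
    then show "u \<in> J j" by simp
  qed
  obtain k where k: "\<forall>j\<ge>k. J j = J k"
    using dcc_pow[OF noeth loc, of i, rule_format, of J] J1 J2 Jd by blast
  show ?thesis
  proof (intro exI allI impI)
    fix j assume j: "j \<ge> k"
    have "Y j \<subseteq> Y k" using chain_anti[of Y, OF Y(3) j] .
    then have "c j \<in> Y k" using cY[of j] by blast
    then have ck: "c j - c k \<in> J k" unfolding Yc[of k] cos_mem .
    have "J j = J k" using k j by blast
    then have "Y j = cos (c j) (J k)" using Yc[of j] by simp
    also have "\<dots> = cos (c k) (J k)" by (rule cos_eq[OF J1 ck])
    also have "\<dots> = Y k" using Yc[of k] by simp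
    finally show "Y j = Y k" .
  qed
qed

lemma lc_seq:
  assumes U: "\<And>i. isCos M i (U i)" "\<And>i. U i \<noteq> {}" "\<And>i. U (Suc i) \<subseteq> U i"
  shows "\<exists>s. \<forall>i. s \<in> U i"
proof -
  have "\<forall>i. \<exists>n. \<forall>j\<ge>n. plusI (U (i + j)) (ideal_pow M i) = plusI (U (i + n)) (ideal_pow M i)"
  proof
    fix i
    show "\<exists>n. \<forall>j\<ge>n. plusI (U (i + j)) (ideal_pow M i) = plusI (U (i + n)) (ideal_pow M i)"
    proof (rule dcc_cos)
      fix j
      show "isCos M i (plusI (U (i + j)) (ideal_pow M i))" by (rule isCos_plusI[OF U(1)])
      show "plusI (U (i + j)) (ideal_pow M i) \<noteq> {}"
        using U(2)[of "i+j"] plusI_sup[OF ideal_pow_ideal, of "U (i+j)" M i] by blast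
      show "plusI (U (i + Suc j)) (ideal_pow M i) \<subseteq> plusI (U (i + j)) (ideal_pow M i)"
        using U(3)[of "i+j"] by (intro plusI_mono) simp_all
    qed
  qed
  from choice[OF this] obtain nf where nf: "\<forall>i. \<forall>j\<ge>nf i. plusI (U (i + j)) (ideal_pow M i) = plusI (U (i + nf i)) (ideal_pow M i)" ..
  define V where "V = (\<lambda>i. plusI (U (i + nf i)) (ideal_pow M i))"
  have VU: "\<And>i. V i \<subseteq> U i"
  proof -
    fix i
    have "U (i + nf i) \<subseteq> U i" using chain_anti[of U, OF U(3), of i "i + nf i"] by simp
    then have "V i \<subseteq> plusI (U i) (ideal_pow M i)" unfolding V_def by (intro plusI_mono) simp_all
    then show "V i \<subseteq> U i" using isCos_absorb[OF U(1)] by simp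
  qed
  have Vne: "\<And>i. V i \<noteq> {}"
    using U(2) plusI_sup[OF ideal_pow_ideal] unfolding V_def by blast
  have VV: "\<And>i. V i \<subseteq> plusI (V (Suc i)) (ideal_pow M i)"
  proof -
    fix i
    define j'' where "j'' = max (nf (Suc i)) (nf i)"
    have "nf (Suc i) \<le> j''" unfolding j''_def by simp
    then have e1': "plusI (U (Suc i + j'')) (ideal_pow M (Suc i)) = V (Suc i)"
      unfolding V_def by (rule nf[rule_format])
    have "nf i \<le> Suc j''" unfolding j''_def by simp
    then have e2': "plusI (U (i + Suc j'')) (ideal_pow M i) = V i"
      unfolding V_def by (rule nf[rule_format])
    note e1 = e1'[symmetric] and e2 = e2'[symmetric]
    have "U (Suc i + j'') \<subseteq> V (Suc i)" unfolding e1 by (rule plusI_sup[OF ideal_pow_ideal])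
    moreover have "i + Suc j'' = Suc i + j''" by simp
    ultimately have "plusI (U (i + Suc j'')) (ideal_pow M i) \<subseteq> plusI (V (Suc i)) (ideal_pow M i)"
      by (intro plusI_mono) simp_all
    then show "V i \<subseteq> plusI (V (Suc i)) (ideal_pow M i)" unfolding e2 .
  qed
  define s where "s = rec_nat (SOME t. t \<in> V 0) (\<lambda>i si. SOME t. t \<in> V (Suc i) \<and> si - t \<in> ideal_pow M i)"
  have s0: "s 0 = (SOME t. t \<in> V 0)" unfolding s_def by simp
  have sS: "\<And>i. s (Suc i) = (SOME t. t \<in> V (Suc i) \<and> s i - t \<in> ideal_pow M i)" unfolding s_def by simp
  have sV: "\<And>i. s i \<in> V i \<and> (s i - s (Suc i) \<in> ideal_pow M i)"
  proof -
    have sV1: "\<And>i. s i \<in> V i"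
    proof -
      fix i show "s i \<in> V i"
      proof (induction i)
        case 0 then show ?case unfolding s0 using Vne[of 0] by (simp add: some_in_eq)
      next
        case (Suc i)
        then have "s i \<in> plusI (V (Suc i)) (ideal_pow M i)" using VV by blast
        then obtain y where "y \<in> V (Suc i)" "s i - y \<in> ideal_pow M i" unfolding plusI_def by blast
        then have "\<exists>t. t \<in> V (Suc i) \<and> s i - t \<in> ideal_pow M i" by blast
        from someI_ex[OF this] show ?case unfolding sS by blast
      qed
    qed
    fix i
    have "s i \<in> plusI (V (Suc i)) (ideal_pow M i)" using VV sV1 by blast
    then obtain y where "y \<in> V (Suc i)" "s i - y \<in> ideal_pow M i" unfolding plusI_def by blast
    then have "\<exists>t. t \<in> V (Suc i) \<and> s i - t \<in> ideal_pow M i" by blast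
    from someI_ex[OF this] have "s i - s (Suc i) \<in> ideal_pow M i" unfolding sS by blast
    then show "s i \<in> V i \<and> (s i - s (Suc i) \<in> ideal_pow M i)" using sV1 by simp
  qed
  have tele: "\<And>i j. i \<le> j \<Longrightarrow> s i - s j \<in> ideal_pow M i"
  proof -
    fix i j :: nat assume "i \<le> j"
    then show "s i - s j \<in> ideal_pow M i"
    proof (induction j rule: dec_induct)
      case base then show ?case using ideal_0[OF ideal_pow_ideal] by simp
    next
      case (step j)
      have "s j - s (Suc j) \<in> ideal_pow M i" using sV[of j] ideal_pow_anti[OF step(1)] by blast
      then have "(s i - s j) + (s j - s (Suc j)) \<in> ideal_pow M i"
        by (rule ideal_add[OF ideal_pow_ideal step(3)])
      then show ?case by simp
    qed
  qed
  have cauchy: "\<forall>i. \<exists>N. \<forall>p\<ge>N. \<forall>q\<ge>N. s p - s q \<in> ideal_pow M i"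
  proof (intro allI exI impI)
    fix i p q :: nat assume "p \<ge> i" "q \<ge> i"
    then have "(s i - s q) - (s i - s p) \<in> ideal_pow M i"
      using ideal_diff[OF ideal_pow_ideal tele tele] by blast
    then show "s p - s q \<in> ideal_pow M i" by simp
  qed
  obtain L where L: "\<forall>i. \<exists>N. \<forall>n\<ge>N. s n - L \<in> ideal_pow M i"
    using compl cauchy unfolding adically_complete_def by blast
  show ?thesis
  proof (intro exI allI)
    fix i
    obtain N where N: "\<forall>n\<ge>N. s n - L \<in> ideal_pow M i" using L by blast
    define n where "n = max N i"
    have a: "s i - s n \<in> ideal_pow M i" by (rule tele) (simp add: n_def)
    have b: "s n - L \<in> ideal_pow M i" using N n_def by simp
    have siL: "s i - L \<in> ideal_pow M i" by (rule ideal_add_eq[OF ideal_pow_ideal a b]) simp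
    obtain c J where cJ: "is_ideal J" "ideal_pow M i \<subseteq> J" "U i = cos c J" using U(1)[of i] unfolding isCos_def by blast
    have "s i \<in> U i" using sV VU by blast
    then have h: "s i - c \<in> J" using cJ(3) by (simp add: cos_mem)
    have h2: "s i - L \<in> J" using siL cJ(2) by blast
    have "L - c \<in> J" by (rule ideal_diff_eq[OF cJ(1) h h2]) simp
    then show "L \<in> U i" using cJ(3) by (simp add: cos_mem)
  qed
qed

end




context cl begin

lemma lc:
  assumes F: "\<And>X. X \<in> \<F> \<Longrightarrow> \<exists>i. isCos M i X"
    and fip: "\<And>\<G>. \<G> \<subseteq> \<F> \<Longrightarrow> finite \<G> \<Longrightarrow> \<Inter>\<G> \<noteq> {}"
  shows "\<Inter>\<F> \<noteq> {}"
proof -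
  define F' where "F' = {\<Inter>\<G> | \<G>. \<G> \<subseteq> \<F> \<and> finite \<G>}"
  have F'ne: "\<And>X. X \<in> F' \<Longrightarrow> X \<noteq> {}" using fip unfolding F'_def by blast
  have fin_cos: "\<And>\<G>. finite \<G> \<Longrightarrow> \<G> \<subseteq> \<F> \<Longrightarrow> \<Inter>\<G> \<noteq> {} \<Longrightarrow> \<exists>i. isCos M i (\<Inter>\<G>)"
  proof -
    fix \<G> :: "'a set set"
    show "finite \<G> \<Longrightarrow> \<G> \<subseteq> \<F> \<Longrightarrow> \<Inter>\<G> \<noteq> {} \<Longrightarrow> \<exists>i. isCos M i (\<Inter>\<G>)"
    proof (induction \<G> rule: finite_induct)
      case empty
      show ?case using isCos_UNIV by auto
    next
      case (insert X G)
      have "\<Inter>G \<noteq> {}" using insert(5) by auto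
      then obtain i where i: "isCos M i (\<Inter>G)" using insert by blast
      obtain k where k: "isCos M k X" using F insert(4) by blast
      obtain x0 where x0: "x0 \<in> X \<inter> \<Inter>G" using insert(5) by auto
      have "isCos M (max k i) (X \<inter> \<Inter>G)" by (rule isCos_Int[OF k i x0])
      then show ?case by auto
    qed
  qed
  have F'cos: "\<And>X. X \<in> F' \<Longrightarrow> \<exists>i. isCos M i X"
  proof -
    fix X assume "X \<in> F'"
    then obtain \<G> where G: "X = \<Inter>\<G>" "\<G> \<subseteq> \<F>" "finite \<G>" unfolding F'_def by blast
    then have "\<Inter>\<G> \<noteq> {}" using fip by blast
    then show "\<exists>i. isCos M i X" using fin_cos G by blast
  qed
  have F'Int: "\<And>X Y. X \<in> F' \<Longrightarrow> Y \<in> F' \<Longrightarrow> X \<inter> Y \<in> F'"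
  proof -
    fix X Y assume "X \<in> F'" "Y \<in> F'"
    then obtain G1 G2 where G: "X = \<Inter>G1" "G1 \<subseteq> \<F>" "finite G1" "Y = \<Inter>G2" "G2 \<subseteq> \<F>" "finite G2"
      unfolding F'_def by blast
    have "X \<inter> Y = \<Inter>(G1 \<union> G2)" using G by auto
    moreover have "G1 \<union> G2 \<subseteq> \<F>" "finite (G1 \<union> G2)" using G by auto
    ultimately show "X \<inter> Y \<in> F'" unfolding F'_def by blast
  qed
  have FF': "\<And>X. X \<in> \<F> \<Longrightarrow> X \<in> F'"
  proof -
    fix X assume "X \<in> \<F>"
    then have "X = \<Inter>{X}" "{X} \<subseteq> \<F>" "finite {X}" by auto
    then show "X \<in> F'" unfolding F'_def by blast
  qed
  have UF': "UNIV \<in> F'"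
  proof -
    have "UNIV = \<Inter>{}" "{} \<subseteq> \<F>" "finite {}" by auto
    then show ?thesis unfolding F'_def by blast
  qed
  define R where "R = (\<lambda>i. {(Y, Y'). Y \<subset> Y' \<and> isCos M i Y \<and> Y \<noteq> {} \<and> isCos M i Y' \<and> Y' \<noteq> {}})"
  have wfR: "\<And>i. wf (R i)"
  proof (rule ccontr)
    fix i assume "\<not> wf (R i)"
    then obtain f where f: "\<forall>j. (f (Suc j), f j) \<in> R i" using wf_iff_no_infinite_down_chain by blast
    then have f1: "\<And>j. isCos M i (f j)" "\<And>j. f j \<noteq> {}" "\<And>j. f (Suc j) \<subseteq> f j"
      unfolding R_def by auto
    from dcc_cos[of i f, OF f1] obtain k where k: "\<forall>j\<ge>k. f j = f k" ..
    have "f (Suc k) = f k" by (rule k[rule_format]) simp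
    moreover have "f (Suc k) \<subset> f k" using f unfolding R_def by auto
    ultimately show False by simp
  qed
  have minex: "\<forall>i. \<exists>X0. X0 \<in> F' \<and> (\<forall>X\<in>F'. plusI X0 (ideal_pow M i) \<subseteq> plusI X (ideal_pow M i))"
  proof
    fix i
    let ?Q = "{plusI X (ideal_pow M i) | X. X \<in> F'}"
    have "plusI UNIV (ideal_pow M i) \<in> ?Q" by (rule CollectI, rule exI[of _ UNIV]) (simp add: UF')
    then obtain Y0 where Y0: "Y0 \<in> ?Q" "\<And>Y. (Y, Y0) \<in> R i \<Longrightarrow> Y \<notin> ?Q"
      by (rule wfE_min[OF wfR[of i]]) (rule that; assumption)
    obtain X0 where X0: "X0 \<in> F'" "Y0 = plusI X0 (ideal_pow M i)"
      using Y0(1) by (elim CollectE exE conjE) (rule that, assumption+)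
    have cosP: "\<And>X. X \<in> F' \<Longrightarrow> isCos M i (plusI X (ideal_pow M i))"
      using F'cos isCos_plusI by blast
    have neP: "\<And>X. X \<in> F' \<Longrightarrow> plusI X (ideal_pow M i) \<noteq> {}"
      using F'ne plusI_sup[OF ideal_pow_ideal] by blast
    show "\<exists>X0. X0 \<in> F' \<and> (\<forall>X\<in>F'. plusI X0 (ideal_pow M i) \<subseteq> plusI X (ideal_pow M i))"
    proof (intro exI conjI ballI)
      show "X0 \<in> F'" by (rule X0(1))
      fix X assume X: "X \<in> F'"
      let ?Z = "plusI (X0 \<inter> X) (ideal_pow M i)"
      have ZF: "X0 \<inter> X \<in> F'" by (rule F'Int[OF X0(1) X])
      have ZQ: "?Z \<in> ?Q" by (rule CollectI, rule exI[of _ "X0 \<inter> X"]) (simp add: ZF)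
      have ZY: "?Z \<subseteq> Y0" unfolding X0(2) by (intro plusI_mono) auto
      have "?Z = Y0"
      proof (rule ccontr)
        assume "?Z \<noteq> Y0"
        then have "?Z \<subset> Y0" using ZY by auto
        then have "(?Z, Y0) \<in> R i" unfolding R_def X0(2)
          using cosP[OF ZF] neP[OF ZF] cosP[OF X0(1)] neP[OF X0(1)] by auto
        then show False using Y0(2) ZQ by blast
      qed
      moreover have "?Z \<subseteq> plusI X (ideal_pow M i)" by (intro plusI_mono) auto
      ultimately show "plusI X0 (ideal_pow M i) \<subseteq> plusI X (ideal_pow M i)" using X0(2) by simp
    qed
  qed
  from choice[OF minex] obtain Xf where Xf: "\<forall>i. Xf i \<in> F' \<and> (\<forall>X\<in>F'. plusI (Xf i) (ideal_pow M i) \<subseteq> plusI X (ideal_pow M i))" ..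
  define U where "U = (\<lambda>i. plusI (Xf i) (ideal_pow M i))"
  have "\<exists>s. \<forall>i. s \<in> U i"
  proof (rule lc_seq)
    fix i
    show "isCos M i (U i)" unfolding U_def using F'cos Xf isCos_plusI by blast
    show "U i \<noteq> {}" unfolding U_def using F'ne Xf plusI_sup[OF ideal_pow_ideal] by blast
    have "U (Suc i) \<subseteq> plusI (Xf i) (ideal_pow M (Suc i))" unfolding U_def using Xf by blast
    also have "\<dots> \<subseteq> U i" unfolding U_def by (intro plusI_mono ideal_pow_Suc_sub) simp
    finally show "U (Suc i) \<subseteq> U i" .
  qed
  then obtain s where s: "\<forall>i. s \<in> U i" by blast
  have "s \<in> \<Inter>\<F>"
  proof
    fix X assume X: "X \<in> \<F>"
    obtain k where k: "isCos M k X" using F X by blast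
    have "s \<in> U k" using s by blast
    also have "\<dots> \<subseteq> plusI X (ideal_pow M k)" unfolding U_def using Xf FF'[OF X] by blast
    also have "\<dots> = X" by (rule isCos_absorb[OF k])
    finally show "s \<in> X" .
  qed
  then show ?thesis by blast
qed

end



definition lin :: "(nat \<Rightarrow> 'a::comm_ring_1) set \<Rightarrow> ((nat \<Rightarrow> 'a) \<Rightarrow> 'a) \<Rightarrow> nat \<Rightarrow> 'a" where
  "lin S \<beta> = (\<lambda>n. \<Sum>y\<in>S. \<beta> y * y n)"

definition rs :: "'b set \<Rightarrow> ('b \<Rightarrow> 'a::comm_ring_1) \<Rightarrow> 'b \<Rightarrow> 'a" where
  "rs S \<gamma> = (\<lambda>y. if y \<in> S then \<gamma> y else 0)"

definition funct :: "('b \<times> 'a) set \<Rightarrow> bool" where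
  "funct G \<longleftrightarrow> (\<forall>z a b. (z, a) \<in> G \<longrightarrow> (z, b) \<in> G \<longrightarrow> a = b)"

definition closed :: "((nat \<Rightarrow> 'a::comm_ring_1) \<times> 'a) set \<Rightarrow> bool" where
  "closed G \<longleftrightarrow> (\<forall>z a z' a'. (z, a) \<in> G \<longrightarrow> (z', a') \<in> G \<longrightarrow> ((\<lambda>n. z n + z' n), a + a') \<in> G) \<and>
                (\<forall>r z a. (z, a) \<in> G \<longrightarrow> ((\<lambda>n. r * z n), r * a) \<in> G)"

lemma sum_rs: "finite S \<Longrightarrow> S' \<subseteq> S \<Longrightarrow> (\<Sum>y\<in>S. rs S' \<gamma> y * f y) = (\<Sum>y\<in>S'. \<gamma> y * f y)"
proof -
  assume S: "finite S" "S' \<subseteq> S"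
  have "(\<Sum>y\<in>S. rs S' \<gamma> y * f y) = (\<Sum>y\<in>S'. rs S' \<gamma> y * f y)"
    by (rule sum.mono_neutral_right[OF S(1) S(2)]) (simp add: rs_def)
  also have "\<dots> = (\<Sum>y\<in>S'. \<gamma> y * f y)" by (rule sum.cong) (simp_all add: rs_def)
  finally show ?thesis .
qed

lemma lin_rs: "finite S \<Longrightarrow> S' \<subseteq> S \<Longrightarrow> lin S (rs S' \<gamma>) = lin S' \<gamma>"
  unfolding lin_def by (rule ext) (rule sum_rs)

lemma sum_delta_mult: "finite S \<Longrightarrow> x \<in> S \<Longrightarrow> (\<Sum>y\<in>S. (if y = x then (c::'a::comm_ring_1) else 0) * f y) = c * f x"
proof -
  assume "finite S" "x \<in> S"
  have e: "(\<lambda>y. (if y = x then c else 0) * f y) = (\<lambda>y. if y = x then c * f x else 0)" by (rule ext) auto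
  have "(\<Sum>y\<in>S. (if y = x then c else 0) * f y) = (\<Sum>y\<in>S. if y = x then c * f x else 0)" by (simp only: e)
  also have "\<dots> = c * f x" using \<open>finite S\<close> \<open>x \<in> S\<close> by (simp add: sum.delta')
  finally show ?thesis .
qed

lemma sum_delta_mult2: "finite S \<Longrightarrow> x \<in> S \<Longrightarrow> (\<Sum>y\<in>S. g y * (if y = x then (c::'a::comm_ring_1) else 0)) = g x * c"
proof -
  assume "finite S" "x \<in> S"
  have e: "(\<lambda>y. g y * (if y = x then c else 0)) = (\<lambda>y. if y = x then g x * c else 0)" by (rule ext) auto
  have "(\<Sum>y\<in>S. g y * (if y = x then c else 0)) = (\<Sum>y\<in>S. if y = x then g x * c else 0)" by (simp only: e)
  also have "\<dots> = g x * c" using \<open>finite S\<close> \<open>x \<in> S\<close> by (simp add: sum.delta')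
  finally show ?thesis .
qed

lemma sum_add_w: "(\<Sum>y\<in>S. g y * ((w y::'a::comm_ring_1) + w' y)) = (\<Sum>y\<in>S. g y * w y) + (\<Sum>y\<in>S. g y * w' y)"
  by (simp add: distrib_left sum.distrib)
lemma sum_diff_w: "(\<Sum>y\<in>S. g y * ((w y::'a::comm_ring_1) - w' y)) = (\<Sum>y\<in>S. g y * w y) - (\<Sum>y\<in>S. g y * w' y)"
  by (simp add: right_diff_distrib sum_subtractf)
lemma sum_smul_w: "(\<Sum>y\<in>S. g y * (r * w y)) = r * (\<Sum>y\<in>S. g y * (w y::'a::comm_ring_1))"
  by (simp add: sum_distrib_left ac_simps)

lemma sum_gam: "finite S \<Longrightarrow>
  (\<Sum>y\<in>insert x S. (rs S \<beta> y - (if y = x then (c::'a::comm_ring_1) else 0)) * f y) = (\<Sum>y\<in>S. \<beta> y * f y) - c * f x"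
proof -
  assume S: "finite S"
  have "(\<Sum>y\<in>insert x S. (rs S \<beta> y - (if y = x then c else 0)) * f y)
      = (\<Sum>y\<in>insert x S. rs S \<beta> y * f y) - (\<Sum>y\<in>insert x S. (if y = x then c else 0) * f y)"
    by (simp add: left_diff_distrib sum_subtractf)
  also have "(\<Sum>y\<in>insert x S. rs S \<beta> y * f y) = (\<Sum>y\<in>S. \<beta> y * f y)"
    by (rule sum_rs) (use S in auto)
  also have "(\<Sum>y\<in>insert x S. (if y = x then c else 0) * f y) = c * f x"
    by (rule sum_delta_mult) (use S in auto)
  finally show ?thesis .
qed

lemma chain_fin:
  assumes C: "C \<in> chains A" "C \<noteq> {}"
  shows "finite F \<Longrightarrow> F \<subseteq> \<Union>C \<Longrightarrow> \<exists>G\<in>C. F \<subseteq> G"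
proof (induction F rule: finite_induct)
  case empty then show ?case using C(2) by blast
next
  case (insert p F)
  then obtain G1 where G1: "G1 \<in> C" "F \<subseteq> G1" by blast
  obtain G2 where G2: "G2 \<in> C" "p \<in> G2" using insert(4) by blast
  have "G1 \<subseteq> G2 \<or> G2 \<subseteq> G1" using C(1) G1(1) G2(1) unfolding chains_def chain_subset_def by simp
  then show ?case
  proof
    assume "G1 \<subseteq> G2" then show ?thesis using G1 G2 by blast
  next
    assume "G2 \<subseteq> G1" then show ?thesis using G1 G2 by blast
  qed
qed

locale sp = cl M for M :: "'a::idom set" +
  fixes I :: "nat \<Rightarrow> 'a set"
  assumes Iid: "\<And>n. is_ideal (I n)"
    and lim: "\<And>i. i \<ge> 1 \<Longrightarrow> \<exists>N. \<forall>n\<ge>N. I n \<subseteq> ideal_pow M i"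
begin

lemma conj1: assumes ev: "\<forall>\<^sub>F n in sequentially. a \<in> I n" shows "a = 0"
proof -
  have "\<forall>i. a \<in> ideal_pow M i"
  proof
    fix i show "a \<in> ideal_pow M i"
    proof (cases "i = 0")
      case True then show ?thesis by simp
    next
      case False
      then have "i \<ge> 1" by simp
      from lim[OF this] obtain N where N: "\<forall>n\<ge>N. I n \<subseteq> ideal_pow M i" ..
      from ev obtain N' where N': "\<forall>n\<ge>N'. a \<in> I n" unfolding eventually_sequentially ..
      have aI: "a \<in> I (max N N')" using N' by simp
      have "I (max N N') \<subseteq> ideal_pow M i" by (rule N[rule_format]) simp
      then show ?thesis using aI by (rule subsetD)
    qed
  qed
  then have "a \<in> (\<Inter>i. ideal_pow M i)" by simp
  then show "a = 0" using compl unfolding adically_complete_def by simp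
qed

definition K where "K = {k. \<forall>\<^sub>F n in sequentially. k n \<in> I n}"

lemma K_add: "k \<in> K \<Longrightarrow> k' \<in> K \<Longrightarrow> (\<lambda>n. k n + k' n) \<in> K"
  unfolding K_def using eventually_conj by (fastforce elim: eventually_mono intro: ideal_add[OF Iid])
lemma K_mult: "k \<in> K \<Longrightarrow> (\<lambda>n. r * k n) \<in> K"
  unfolding K_def by (fastforce elim: eventually_mono intro: ideal_mult[OF Iid])
lemma K_diff: "k \<in> K \<Longrightarrow> k' \<in> K \<Longrightarrow> (\<lambda>n. k n - k' n) \<in> K"
  unfolding K_def using eventually_conj by (fastforce elim: eventually_mono intro: ideal_diff[OF Iid])

definition G0 where "G0 = {((\<lambda>n. k n + a), a) | k a. k \<in> K}"

lemma G0_mem: "(z, a) \<in> G0 \<longleftrightarrow> (\<lambda>n. z n - a) \<in> K"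
proof
  assume "(z, a) \<in> G0"
  then obtain k where "z = (\<lambda>n. k n + a)" "k \<in> K" unfolding G0_def by blast
  then show "(\<lambda>n. z n - a) \<in> K" by simp
next
  assume h: "(\<lambda>n. z n - a) \<in> K"
  have e: "(z, a) = ((\<lambda>n. (\<lambda>n. z n - a) n + a), a)" by simp
  show "(z, a) \<in> G0" unfolding G0_def
    by (rule CollectI, rule exI[of _ "\<lambda>n. z n - a"], rule exI[of _ a]) (simp add: h)
qed

definition Inv where
  "Inv G \<longleftrightarrow> (\<forall>S E i. finite S \<longrightarrow> finite E \<longrightarrow> (\<forall>\<beta>\<in>E. lin S \<beta> \<in> Domain G) \<longrightarrow>
     (\<exists>w. \<forall>\<beta>\<in>E. \<forall>a. (lin S \<beta>, a) \<in> G \<longrightarrow> a - (\<Sum>y\<in>S. \<beta> y * w y) \<in> ideal_pow M i))"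

definition good where "good G \<longleftrightarrow> funct G \<and> closed G \<and> G0 \<subseteq> G \<and> Inv G"

lemma G0_funct: "funct G0"
  unfolding funct_def
proof (intro allI impI)
  fix z a b assume "(z, a) \<in> G0" "(z, b) \<in> G0"
  then have "(\<lambda>n. z n - b) \<in> K" "(\<lambda>n. z n - a) \<in> K" by (simp_all add: G0_mem)
  then have "(\<lambda>n. (z n - b) - (z n - a)) \<in> K" by (rule K_diff)
  then have "\<forall>\<^sub>F n in sequentially. a - b \<in> I n" unfolding K_def by simp
  then have "a - b = 0" by (rule conj1)
  then show "a = b" by simp
qed

lemma G0_closed: "closed G0"
  unfolding closed_def
proof (intro conjI allI impI)
  fix z a z' a' assume "(z, a) \<in> G0" "(z', a') \<in> G0"
  then have "(\<lambda>n. z n - a) \<in> K" "(\<lambda>n. z' n - a') \<in> K" by (simp_all add: G0_mem)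
  then have "(\<lambda>n. (z n - a) + (z' n - a')) \<in> K" by (rule K_add)
  moreover have "(\<lambda>n. (z n - a) + (z' n - a')) = (\<lambda>n. (z n + z' n) - (a + a'))" by (simp add: algebra_simps)
  ultimately show "((\<lambda>n. z n + z' n), a + a') \<in> G0" by (simp add: G0_mem)
next
  fix r z a assume "(z, a) \<in> G0"
  then have "(\<lambda>n. z n - a) \<in> K" by (simp add: G0_mem)
  then have "(\<lambda>n. r * (z n - a)) \<in> K" by (rule K_mult)
  moreover have "(\<lambda>n. r * (z n - a)) = (\<lambda>n. r * z n - r * a)" by (simp add: algebra_simps)
  ultimately show "((\<lambda>n. r * z n), r * a) \<in> G0" by (simp add: G0_mem)
qed

lemma G0_Inv: "Inv G0"
  unfolding Inv_def
proof (intro allI impI)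
  fix S E i assume S: "finite S" and E: "finite E" and D: "\<forall>\<beta>\<in>E. lin S \<beta> \<in> Domain G0"
  show "\<exists>w. \<forall>\<beta>\<in>E. \<forall>a. (lin S \<beta>, a) \<in> G0 \<longrightarrow> a - (\<Sum>y\<in>S. \<beta> y * w y) \<in> ideal_pow M i"
  proof (cases "i = 0")
    case True then show ?thesis by simp
  next
    case False
    then have "i \<ge> 1" by simp
    from lim[OF this] obtain N0 where N0: "\<forall>n\<ge>N0. I n \<subseteq> ideal_pow M i" ..
    have "\<forall>\<beta>\<in>E. \<forall>\<^sub>F n in sequentially. \<forall>a. (lin S \<beta>, a) \<in> G0 \<longrightarrow> lin S \<beta> n - a \<in> I n"
    proof
      fix \<beta> assume "\<beta> \<in> E"
      then obtain a0 where a0: "(lin S \<beta>, a0) \<in> G0" using D by blast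
      then have "\<forall>\<^sub>F n in sequentially. lin S \<beta> n - a0 \<in> I n" by (simp add: G0_mem K_def)
      then show "\<forall>\<^sub>F n in sequentially. \<forall>a. (lin S \<beta>, a) \<in> G0 \<longrightarrow> lin S \<beta> n - a \<in> I n"
      proof (rule eventually_mono)
        fix n assume h: "lin S \<beta> n - a0 \<in> I n"
        show "\<forall>a. (lin S \<beta>, a) \<in> G0 \<longrightarrow> lin S \<beta> n - a \<in> I n"
        proof (intro allI impI)
          fix a assume "(lin S \<beta>, a) \<in> G0"
          then have "a = a0" using a0 G0_funct unfolding funct_def by blast
          then show "lin S \<beta> n - a \<in> I n" using h by simp
        qed
      qed
    qed
    then have "\<forall>\<^sub>F n in sequentially. \<forall>\<beta>\<in>E. \<forall>a. (lin S \<beta>, a) \<in> G0 \<longrightarrow> lin S \<beta> n - a \<in> I n"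
      by (rule eventually_ball_finite[OF E])
    then obtain N1 where N1: "\<forall>n\<ge>N1. \<forall>\<beta>\<in>E. \<forall>a. (lin S \<beta>, a) \<in> G0 \<longrightarrow> lin S \<beta> n - a \<in> I n"
      unfolding eventually_sequentially ..
    define N where "N = max N0 N1"
    show ?thesis
    proof (intro exI ballI allI impI)
      fix \<beta> a assume "\<beta> \<in> E" "(lin S \<beta>, a) \<in> G0"
      then have "lin S \<beta> N - a \<in> I N" using N1 N_def by simp
      moreover have "I N \<subseteq> ideal_pow M i" unfolding N_def by (rule N0[rule_format]) simp
      ultimately have "lin S \<beta> N - a \<in> ideal_pow M i" by blast
      then have "- (lin S \<beta> N - a) \<in> ideal_pow M i" by (rule ideal_neg[OF ideal_pow_ideal])
      moreover have "- (lin S \<beta> N - a) = a - (\<Sum>y\<in>S. \<beta> y * y N)" by (simp add: lin_def)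
      ultimately show "a - (\<Sum>y\<in>S. \<beta> y * (\<lambda>y. y N) y) \<in> ideal_pow M i" by simp
    qed
  qed
qed

lemma G0_good: "good G0"
  unfolding good_def using G0_funct G0_closed G0_Inv by simp

lemma union_good:
  assumes C: "C \<in> chains {G. good G}" "C \<noteq> {}"
  shows "good (\<Union>C)"
proof -
  have gC: "\<And>G. G \<in> C \<Longrightarrow> good G" using C(1) unfolding chains_def by blast
  have two: "\<And>p q. p \<in> \<Union>C \<Longrightarrow> q \<in> \<Union>C \<Longrightarrow> \<exists>G\<in>C. p \<in> G \<and> q \<in> G"
  proof -
    fix p q assume "p \<in> \<Union>C" "q \<in> \<Union>C"
    then have "{p, q} \<subseteq> \<Union>C" by simp
    then obtain G where "G \<in> C" "{p, q} \<subseteq> G" using chain_fin[OF C, of "{p,q}"] by blast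
    then show "\<exists>G\<in>C. p \<in> G \<and> q \<in> G" by blast
  qed
  have fU: "funct (\<Union>C)"
    unfolding funct_def
  proof (intro allI impI)
    fix z a b assume "(z, a) \<in> \<Union>C" "(z, b) \<in> \<Union>C"
    then obtain G where G: "G \<in> C" "(z, a) \<in> G" "(z, b) \<in> G" using two by blast
    then show "a = b" using gC[OF G(1)] unfolding good_def funct_def by blast
  qed
  have cU: "closed (\<Union>C)"
    unfolding closed_def
  proof (intro conjI allI impI)
    fix z a z' a' assume "(z, a) \<in> \<Union>C" "(z', a') \<in> \<Union>C"
    then obtain G where G: "G \<in> C" "(z, a) \<in> G" "(z', a') \<in> G" using two by blast
    then have "((\<lambda>n. z n + z' n), a + a') \<in> G" using gC[OF G(1)] unfolding good_def closed_def by blast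
    then show "((\<lambda>n. z n + z' n), a + a') \<in> \<Union>C" using G(1) by blast
  next
    fix r z a assume "(z, a) \<in> \<Union>C"
    then obtain G where G: "G \<in> C" "(z, a) \<in> G" by blast
    then have "((\<lambda>n. r * z n), r * a) \<in> G" using gC[OF G(1)] unfolding good_def closed_def by blast
    then show "((\<lambda>n. r * z n), r * a) \<in> \<Union>C" using G(1) by blast
  qed
  have 0: "G0 \<subseteq> \<Union>C"
  proof -
    obtain G where "G \<in> C" using C(2) by blast
    then show ?thesis using gC unfolding good_def by blast
  qed
  have iU: "Inv (\<Union>C)"
    unfolding Inv_def
  proof (intro allI impI)
    fix S E i assume S: "finite S" and E: "finite E" and D: "\<forall>\<beta>\<in>E. lin S \<beta> \<in> Domain (\<Union>C)"
    have "\<forall>\<beta>\<in>E. \<exists>a. (lin S \<beta>, a) \<in> \<Union>C" using D by blast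
    from bchoice[OF this] obtain f where f: "\<forall>\<beta>\<in>E. (lin S \<beta>, f \<beta>) \<in> \<Union>C" ..
    have "finite ((\<lambda>\<beta>. (lin S \<beta>, f \<beta>)) ` E)" using E by simp
    moreover have "(\<lambda>\<beta>. (lin S \<beta>, f \<beta>)) ` E \<subseteq> \<Union>C" using f by blast
    ultimately obtain G where G: "G \<in> C" "(\<lambda>\<beta>. (lin S \<beta>, f \<beta>)) ` E \<subseteq> G" using chain_fin[OF C] by blast
    have "Inv G" using gC[OF G(1)] unfolding good_def by simp
    moreover have "\<forall>\<beta>\<in>E. lin S \<beta> \<in> Domain G" using G(2) by blast
    ultimately obtain w where w: "\<forall>\<beta>\<in>E. \<forall>a. (lin S \<beta>, a) \<in> G \<longrightarrow> a - (\<Sum>y\<in>S. \<beta> y * w y) \<in> ideal_pow M i"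
      unfolding Inv_def using S E by blast
    show "\<exists>w. \<forall>\<beta>\<in>E. \<forall>a. (lin S \<beta>, a) \<in> \<Union>C \<longrightarrow> a - (\<Sum>y\<in>S. \<beta> y * w y) \<in> ideal_pow M i"
    proof (intro exI ballI allI impI)
      fix \<beta> a assume b: "\<beta> \<in> E" and a: "(lin S \<beta>, a) \<in> \<Union>C"
      have "a = f \<beta>" using fU a f b unfolding funct_def by blast
      moreover have "(lin S \<beta>, f \<beta>) \<in> G" using G(2) b by blast
      ultimately show "a - (\<Sum>y\<in>S. \<beta> y * w y) \<in> ideal_pow M i" using w b by blast
    qed
  qed
  show ?thesis unfolding good_def using fU cU 0 iU by simp
qed

end



context sp begin

lemma extend:
  assumes g: "good G" and x: "x \<notin> Domain G"
  shows "\<exists>G'. good G' \<and> G \<subseteq> G' \<and> x \<in> Domain G'"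
proof -
  have fG: "funct G" and cG: "closed G" and G0G: "G0 \<subseteq> G" and iG: "Inv G"
    using g unfolding good_def by simp_all
  have fGr: "\<And>z a b. (z, a) \<in> G \<Longrightarrow> (z, b) \<in> G \<Longrightarrow> a = b" using fG unfolding funct_def by blast
  have addG: "\<And>z a z' a'. (z, a) \<in> G \<Longrightarrow> (z', a') \<in> G \<Longrightarrow> ((\<lambda>n. z n + z' n), a + a') \<in> G"
    using cG unfolding closed_def by blast
  have mulG: "\<And>r z a. (z, a) \<in> G \<Longrightarrow> ((\<lambda>n. r * z n), r * a) \<in> G"
    using cG unfolding closed_def by blast
  have iGr: "\<And>S E i. finite S \<Longrightarrow> finite E \<Longrightarrow> (\<forall>\<beta>\<in>E. lin S \<beta> \<in> Domain G) \<Longrightarrow>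
      \<exists>w. \<forall>\<beta>\<in>E. \<forall>a. (lin S \<beta>, a) \<in> G \<longrightarrow> a - (\<Sum>y\<in>S. \<beta> y * w y) \<in> ideal_pow M i"
    using iG unfolding Inv_def by blast
  define Cs where "Cs = (\<lambda>S \<Gamma> i. {v. \<exists>w. w x = v \<and>
     (\<forall>\<gamma>\<in>\<Gamma>. \<forall>a. (lin S \<gamma>, a) \<in> G \<longrightarrow> a - (\<Sum>y\<in>S. \<gamma> y * w y) \<in> ideal_pow M i)})"
  define adm where "adm = (\<lambda>S \<Gamma>. finite S \<and> x \<in> S \<and> finite \<Gamma> \<and> (\<forall>\<gamma>\<in>\<Gamma>. lin S \<gamma> \<in> Domain G))"
  have cosC: "\<And>S \<Gamma> i. adm S \<Gamma> \<Longrightarrow> isCos M i (Cs S \<Gamma> i)"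
  proof -
    fix S \<Gamma> i assume "adm S \<Gamma>"
    then have S: "finite S" "x \<in> S" "finite \<Gamma>" "\<forall>\<gamma>\<in>\<Gamma>. lin S \<gamma> \<in> Domain G" unfolding adm_def by simp_all
    obtain w1 where w1: "\<forall>\<gamma>\<in>\<Gamma>. \<forall>a. (lin S \<gamma>, a) \<in> G \<longrightarrow> a - (\<Sum>y\<in>S. \<gamma> y * w1 y) \<in> ideal_pow M i"
      using iGr[OF S(1) S(3) S(4)] by blast
    define J where "J = {u. \<exists>w0. w0 x = u \<and> (\<forall>\<gamma>\<in>\<Gamma>. (\<Sum>y\<in>S. \<gamma> y * w0 y) \<in> ideal_pow M i)}"
    have Jid: "is_ideal J" unfolding is_ideal_def
    proof (intro conjI ballI allI)
      show "0 \<in> J" unfolding J_def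
        by (rule CollectI, rule exI[of _ "\<lambda>y. 0"]) (simp add: ideal_0[OF ideal_pow_ideal])
    next
      fix u u' assume "u \<in> J" "u' \<in> J"
      then obtain w0 w0' where w: "w0 x = u" "\<forall>\<gamma>\<in>\<Gamma>. (\<Sum>y\<in>S. \<gamma> y * w0 y) \<in> ideal_pow M i"
        "w0' x = u'" "\<forall>\<gamma>\<in>\<Gamma>. (\<Sum>y\<in>S. \<gamma> y * w0' y) \<in> ideal_pow M i" unfolding J_def by blast
      show "u + u' \<in> J" unfolding J_def
      proof (rule CollectI, rule exI[of _ "\<lambda>y. w0 y + w0' y"], intro conjI ballI)
        show "w0 x + w0' x = u + u'" using w by simp
        fix \<gamma> assume "\<gamma> \<in> \<Gamma>"
        then show "(\<Sum>y\<in>S. \<gamma> y * (w0 y + w0' y)) \<in> ideal_pow M i"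
          unfolding sum_add_w using w ideal_add[OF ideal_pow_ideal] by blast
      qed
    next
      fix r u assume "u \<in> J"
      then obtain w0 where w: "w0 x = u" "\<forall>\<gamma>\<in>\<Gamma>. (\<Sum>y\<in>S. \<gamma> y * w0 y) \<in> ideal_pow M i"
        unfolding J_def by blast
      show "r * u \<in> J" unfolding J_def
      proof (rule CollectI, rule exI[of _ "\<lambda>y. r * w0 y"], intro conjI ballI)
        show "r * w0 x = r * u" using w by simp
        fix \<gamma> assume "\<gamma> \<in> \<Gamma>"
        then show "(\<Sum>y\<in>S. \<gamma> y * (r * w0 y)) \<in> ideal_pow M i"
          unfolding sum_smul_w using w ideal_mult[OF ideal_pow_ideal] by blast
      qed
    qed
    have MJ: "ideal_pow M i \<subseteq> J"
    proof
      fix u assume u: "u \<in> ideal_pow M i"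
      show "u \<in> J" unfolding J_def
      proof (rule CollectI, rule exI[of _ "\<lambda>y. if y = x then u else 0"], intro conjI ballI)
        show "(if x = x then u else 0) = u" by simp
        fix \<gamma> assume "\<gamma> \<in> \<Gamma>"
        have "(\<Sum>y\<in>S. \<gamma> y * (if y = x then u else 0)) = \<gamma> x * u" by (rule sum_delta_mult2[OF S(1) S(2)])
        then show "(\<Sum>y\<in>S. \<gamma> y * (if y = x then u else 0)) \<in> ideal_pow M i"
          using ideal_mult[OF ideal_pow_ideal u] by simp
      qed
    qed
    have "Cs S \<Gamma> i = cos (w1 x) J"
    proof (intro equalityI subsetI)
      fix v assume "v \<in> Cs S \<Gamma> i"
      then obtain w where w: "w x = v"
        "\<forall>\<gamma>\<in>\<Gamma>. \<forall>a. (lin S \<gamma>, a) \<in> G \<longrightarrow> a - (\<Sum>y\<in>S. \<gamma> y * w y) \<in> ideal_pow M i"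
        unfolding Cs_def by blast
      have "v - w1 x \<in> J" unfolding J_def
      proof (rule CollectI, rule exI[of _ "\<lambda>y. w y - w1 y"], intro conjI ballI)
        show "w x - w1 x = v - w1 x" using w by simp
        fix \<gamma> assume gam: "\<gamma> \<in> \<Gamma>"
        then obtain a where a: "(lin S \<gamma>, a) \<in> G" using S(4) by blast
        have h1: "a - (\<Sum>y\<in>S. \<gamma> y * w1 y) \<in> ideal_pow M i" using w1 gam a by blast
        have h2: "a - (\<Sum>y\<in>S. \<gamma> y * w y) \<in> ideal_pow M i" using w(2) gam a by blast
        have e: "(\<Sum>y\<in>S. \<gamma> y * (w y - w1 y)) = (a - (\<Sum>y\<in>S. \<gamma> y * w1 y)) - (a - (\<Sum>y\<in>S. \<gamma> y * w y))"
          unfolding sum_diff_w by simp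
        show "(\<Sum>y\<in>S. \<gamma> y * (w y - w1 y)) \<in> ideal_pow M i"
          unfolding e by (rule ideal_diff[OF ideal_pow_ideal h1 h2])
      qed
      then show "v \<in> cos (w1 x) J" by (simp add: cos_mem)
    next
      fix v assume "v \<in> cos (w1 x) J"
      then obtain w0 where w0: "w0 x = v - w1 x" "\<forall>\<gamma>\<in>\<Gamma>. (\<Sum>y\<in>S. \<gamma> y * w0 y) \<in> ideal_pow M i"
        unfolding cos_mem J_def by blast
      show "v \<in> Cs S \<Gamma> i" unfolding Cs_def
      proof (rule CollectI, rule exI[of _ "\<lambda>y. w1 y + w0 y"], intro conjI ballI allI impI)
        show "w1 x + w0 x = v" using w0 by simp
        fix \<gamma> a assume gam: "\<gamma> \<in> \<Gamma>" and a: "(lin S \<gamma>, a) \<in> G"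
        have h1: "a - (\<Sum>y\<in>S. \<gamma> y * w1 y) \<in> ideal_pow M i" using w1 gam a by blast
        have h2: "(\<Sum>y\<in>S. \<gamma> y * w0 y) \<in> ideal_pow M i" using w0(2) gam by blast
        have e: "a - (\<Sum>y\<in>S. \<gamma> y * (w1 y + w0 y)) = (a - (\<Sum>y\<in>S. \<gamma> y * w1 y)) - (\<Sum>y\<in>S. \<gamma> y * w0 y)"
          unfolding sum_add_w by simp
        show "a - (\<Sum>y\<in>S. \<gamma> y * (w1 y + w0 y)) \<in> ideal_pow M i"
          unfolding e by (rule ideal_diff[OF ideal_pow_ideal h1 h2])
      qed
    qed
    then show "isCos M i (Cs S \<Gamma> i)" unfolding isCos_def using Jid MJ by blast
  qed
  have fipC: "\<And>T'. finite T' \<Longrightarrow> (\<forall>t\<in>T'. adm (fst t) (fst (snd t))) \<Longrightarrow>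
      \<exists>v. \<forall>t\<in>T'. v \<in> Cs (fst t) (fst (snd t)) (snd (snd t))"
  proof -
    fix T' :: "((nat \<Rightarrow> 'a) set \<times> ((nat \<Rightarrow> 'a) \<Rightarrow> 'a) set \<times> nat) set"
    assume T': "finite T'" "\<forall>t\<in>T'. adm (fst t) (fst (snd t))"
    define S where "S = insert x (\<Union>t\<in>T'. fst t)"
    define \<Gamma> where "\<Gamma> = (\<Union>t\<in>T'. rs (fst t) ` fst (snd t))"
    define i where "i = (\<Sum>t\<in>T'. snd (snd t))"
    have Sfin: "finite S" using T' unfolding S_def adm_def by auto
    have sub: "\<And>t. t \<in> T' \<Longrightarrow> fst t \<subseteq> S" unfolding S_def by auto
    have Gfin: "finite \<Gamma>" using T' unfolding \<Gamma>_def adm_def by auto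
    have GD: "\<forall>\<gamma>\<in>\<Gamma>. lin S \<gamma> \<in> Domain G"
    proof
      fix \<gamma>' assume "\<gamma>' \<in> \<Gamma>"
      then obtain t \<gamma> where t: "t \<in> T'" "\<gamma> \<in> fst (snd t)" "\<gamma>' = rs (fst t) \<gamma>" unfolding \<Gamma>_def by blast
      have "lin S \<gamma>' = lin (fst t) \<gamma>" unfolding t(3) by (rule lin_rs[OF Sfin sub[OF t(1)]])
      then show "lin S \<gamma>' \<in> Domain G" using T'(2) t unfolding adm_def by auto
    qed
    obtain w where w: "\<forall>\<gamma>\<in>\<Gamma>. \<forall>a. (lin S \<gamma>, a) \<in> G \<longrightarrow> a - (\<Sum>y\<in>S. \<gamma> y * w y) \<in> ideal_pow M i"
      using iGr[OF Sfin Gfin GD] by blast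
    show "\<exists>v. \<forall>t\<in>T'. v \<in> Cs (fst t) (fst (snd t)) (snd (snd t))"
    proof (intro exI ballI)
      fix t assume t: "t \<in> T'"
      have le: "snd (snd t) \<le> i" unfolding i_def by (rule member_le_sum[OF t _ T'(1)]) simp
      show "w x \<in> Cs (fst t) (fst (snd t)) (snd (snd t))" unfolding Cs_def
      proof (rule CollectI, rule exI[of _ w], intro conjI ballI allI impI)
        show "w x = w x" ..
        fix \<gamma> a assume gam: "\<gamma> \<in> fst (snd t)" and a: "(lin (fst t) \<gamma>, a) \<in> G"
        have inG: "rs (fst t) \<gamma> \<in> \<Gamma>" unfolding \<Gamma>_def using t gam by blast
        have "lin S (rs (fst t) \<gamma>) = lin (fst t) \<gamma>" by (rule lin_rs[OF Sfin sub[OF t]])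
        then have "(lin S (rs (fst t) \<gamma>), a) \<in> G" using a by simp
        then have "a - (\<Sum>y\<in>S. rs (fst t) \<gamma> y * w y) \<in> ideal_pow M i" using w inG by blast
        moreover have "(\<Sum>y\<in>S. rs (fst t) \<gamma> y * w y) = (\<Sum>y\<in>fst t. \<gamma> y * w y)"
          by (rule sum_rs[OF Sfin sub[OF t]])
        ultimately show "a - (\<Sum>y\<in>fst t. \<gamma> y * w y) \<in> ideal_pow M (snd (snd t))"
          using ideal_pow_anti[OF le] by auto
      qed
    qed
  qed
  define T :: "((nat \<Rightarrow> 'a) set \<times> ((nat \<Rightarrow> 'a) \<Rightarrow> 'a) set \<times> nat) set"
    where "T = {t. adm (fst t) (fst (snd t))}"
  define CF where "CF = (\<lambda>t. Cs (fst t) (fst (snd t)) (snd (snd t)))"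
  have "\<Inter>(CF ` T) \<noteq> {}"
  proof (rule lc)
    fix X assume "X \<in> CF ` T"
    then obtain t where t: "t \<in> T" "X = CF t" by (elim imageE)
    then show "\<exists>i. isCos M i X" using cosC unfolding T_def CF_def by blast
  next
    fix \<G> assume G: "\<G> \<subseteq> CF ` T" "finite \<G>"
    from finite_subset_image[OF G(2) G(1)] obtain T' where T': "T' \<subseteq> T" "finite T'" "\<G> = CF ` T'"
      by (elim exE conjE)
    have "\<forall>t\<in>T'. adm (fst t) (fst (snd t))" using T'(1) unfolding T_def by blast
    then obtain v where v: "\<forall>t\<in>T'. v \<in> CF t" using fipC[OF T'(2)] unfolding CF_def by blast
    have "v \<in> \<Inter>\<G>" unfolding T'(3) using v by blast
    then show "\<Inter>\<G> \<noteq> {}" by blast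
  qed
  then obtain v where v: "v \<in> \<Inter>(CF ` T)" by blast
  have vC: "\<And>S \<Gamma> i. adm S \<Gamma> \<Longrightarrow> v \<in> Cs S \<Gamma> i"
  proof -
    fix S \<Gamma> i assume "adm S \<Gamma>"
    then have "(S, \<Gamma>, i) \<in> T" unfolding T_def by simp
    then show "v \<in> Cs S \<Gamma> i" using v unfolding CF_def by fastforce
  qed
  have wd: "\<And>d b c. (d, b) \<in> G \<Longrightarrow> d = (\<lambda>n. c * x n) \<Longrightarrow> b = c * v"
  proof -
    fix d b c assume db: "(d, b) \<in> G" and d: "d = (\<lambda>n. c * x n)"
    have linx: "lin {x} (\<lambda>y. c) = d" unfolding lin_def d by simp
    have adm1: "adm {x} {\<lambda>y. c}" unfolding adm_def using db linx by auto
    have "\<forall>i. b - c * v \<in> ideal_pow M i"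
    proof
      fix i
      from vC[OF adm1, of i] obtain w where w: "w x = v"
        "\<forall>\<gamma>\<in>{\<lambda>y. c}. \<forall>a. (lin {x} \<gamma>, a) \<in> G \<longrightarrow> a - (\<Sum>y\<in>{x}. \<gamma> y * w y) \<in> ideal_pow M i"
        unfolding Cs_def by blast
      then have "b - (\<Sum>y\<in>{x}. c * w y) \<in> ideal_pow M i" using db linx by auto
      then show "b - c * v \<in> ideal_pow M i" using w(1) by simp
    qed
    then have "b - c * v \<in> (\<Inter>i. ideal_pow M i)" by simp
    then have "b - c * v = 0" using compl unfolding adically_complete_def by simp
    then show "b = c * v" by simp
  qed
  define G' where "G' = {((\<lambda>n. d n + c * x n), b + c * v) | d b c. (d, b) \<in> G}"
  have G'I: "\<And>d b c. (d, b) \<in> G \<Longrightarrow> ((\<lambda>n. d n + c * x n), b + c * v) \<in> G'"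
  proof -
    fix d b c assume db: "(d, b) \<in> G"
    show "((\<lambda>n. d n + c * x n), b + c * v) \<in> G'" unfolding G'_def
      by (rule CollectI, rule exI[of _ d], rule exI[of _ b], rule exI[of _ c]) (simp add: db)
  qed
  have G'E: "\<And>z a. (z, a) \<in> G' \<Longrightarrow> \<exists>d b c. (d, b) \<in> G \<and> z = (\<lambda>n. d n + c * x n) \<and> a = b + c * v"
  proof -
    fix z a assume "(z, a) \<in> G'"
    then have "\<exists>d b c. (z, a) = ((\<lambda>n. d n + c * x n), b + c * v) \<and> (d, b) \<in> G"
      unfolding G'_def by (simp only: mem_Collect_eq)
    then obtain d b c where dbc: "(z, a) = ((\<lambda>n. d n + c * x n), b + c * v)" "(d, b) \<in> G"
      by (elim exE conjE)
    show "\<exists>d b c. (d, b) \<in> G \<and> z = (\<lambda>n. d n + c * x n) \<and> a = b + c * v"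
      by (rule exI[of _ d], rule exI[of _ b], rule exI[of _ c]) (use dbc in simp)
  qed
  have fG': "funct G'"
    unfolding funct_def
  proof (intro allI impI)
    fix z a a' assume h1: "(z, a) \<in> G'" and h2: "(z, a') \<in> G'"
    from G'E[OF h1] obtain d b c where r1: "(d, b) \<in> G" "z = (\<lambda>n. d n + c * x n)" "a = b + c * v"
      by (elim exE conjE)
    from G'E[OF h2] obtain d' b' c' where r2: "(d', b') \<in> G" "z = (\<lambda>n. d' n + c' * x n)" "a' = b' + c' * v"
      by (elim exE conjE)
    note r = r1 r2
    have zz: "(\<lambda>n. d n + c * x n) = (\<lambda>n. d' n + c' * x n)" using r1(2) r2(2) by simp
    have "(\<lambda>n. d' n + (-1) * d n) = (\<lambda>n. (c - c') * x n)"
    proof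
      fix n
      have "d n + c * x n = d' n + c' * x n" using fun_cong[OF zz, of n] by simp
      then show "d' n + (-1) * d n = (c - c') * x n" by (simp add: algebra_simps)
    qed
    moreover have "((\<lambda>n. d' n + (-1) * d n), b' + (-1) * b) \<in> G" by (rule addG[OF r(4) mulG[OF r(1)]])
    ultimately have "b' + (-1) * b = (c - c') * v" using wd by simp
    then show "a = a'" using r(3) r(6) by (simp add: algebra_simps)
  qed
  have cG': "closed G'"
    unfolding closed_def
  proof (intro conjI allI impI)
    fix z a z' a' assume h1: "(z, a) \<in> G'" and h2: "(z', a') \<in> G'"
    from G'E[OF h1] obtain d b c where r1: "(d, b) \<in> G" "z = (\<lambda>n. d n + c * x n)" "a = b + c * v"
      by (elim exE conjE)
    from G'E[OF h2] obtain d' b' c' where r2: "(d', b') \<in> G" "z' = (\<lambda>n. d' n + c' * x n)" "a' = b' + c' * v"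
      by (elim exE conjE)
    note r = r1 r2
    have "((\<lambda>n. (\<lambda>n. d n + d' n) n + (c + c') * x n), (b + b') + (c + c') * v) \<in> G'"
      by (rule G'I[OF addG[OF r(1) r(4)]])
    moreover have "((\<lambda>n. (\<lambda>n. d n + d' n) n + (c + c') * x n), (b + b') + (c + c') * v) =
        ((\<lambda>n. z n + z' n), a + a')" using r by (simp add: algebra_simps)
    ultimately show "((\<lambda>n. z n + z' n), a + a') \<in> G'" by simp
  next
    fix r z a assume h1: "(z, a) \<in> G'"
    from G'E[OF h1] obtain d b c where q: "(d, b) \<in> G" "z = (\<lambda>n. d n + c * x n)" "a = b + c * v"
      by (elim exE conjE)
    have "((\<lambda>n. (\<lambda>n. r * d n) n + (r * c) * x n), r * b + (r * c) * v) \<in> G'"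
      by (rule G'I[OF mulG[OF q(1)]])
    moreover have "((\<lambda>n. (\<lambda>n. r * d n) n + (r * c) * x n), r * b + (r * c) * v) =
        ((\<lambda>n. r * z n), r * a)" using q by (simp add: algebra_simps)
    ultimately show "((\<lambda>n. r * z n), r * a) \<in> G'" by simp
  qed
  have GG': "G \<subseteq> G'"
  proof
    fix p assume p: "p \<in> G"
    obtain d b where db: "p = (d, b)" by (cases p)
    have "((\<lambda>n. d n + 0 * x n), b + 0 * v) \<in> G'" by (rule G'I) (use p db in simp)
    then show "p \<in> G'" using db by simp
  qed
  have z0: "((\<lambda>n. 0), 0) \<in> G"
  proof -
    have "(\<lambda>n. (\<lambda>n. 0) n - 0) \<in> K" unfolding K_def using ideal_0[OF Iid] by simp
    then have "((\<lambda>n. 0), 0) \<in> G0" by (simp only: G0_mem)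
    then show ?thesis using G0G by blast
  qed
  have xD: "x \<in> Domain G'"
  proof -
    have "((\<lambda>n. (\<lambda>n. 0) n + 1 * x n), 0 + 1 * v) \<in> G'" by (rule G'I[OF z0])
    then have "(x, 0 + 1 * v) \<in> G'" by simp
    then show ?thesis by (rule DomainI)
  qed
  have iG': "Inv G'"
    unfolding Inv_def
  proof (intro allI impI)
    fix S E i assume S: "finite S" and E: "finite E" and D: "\<forall>\<beta>\<in>E. lin S \<beta> \<in> Domain G'"
    have "\<forall>\<beta>\<in>E. \<exists>p. (fst p, fst (snd p)) \<in> G \<and> lin S \<beta> = (\<lambda>n. fst p n + snd (snd p) * x n)"
    proof
      fix \<beta> assume "\<beta> \<in> E"
      then obtain a where a: "(lin S \<beta>, a) \<in> G'" using D by blast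
      from G'E[OF a] obtain d b c where "(d, b) \<in> G" "lin S \<beta> = (\<lambda>n. d n + c * x n)"
        by (elim exE conjE)
      then show "\<exists>p. (fst p, fst (snd p)) \<in> G \<and> lin S \<beta> = (\<lambda>n. fst p n + snd (snd p) * x n)"
        by (intro exI[of _ "(d, b, c)"]) simp
    qed
    from bchoice[OF this] obtain pf where pf:
      "\<forall>\<beta>\<in>E. (fst (pf \<beta>), fst (snd (pf \<beta>))) \<in> G \<and> lin S \<beta> = (\<lambda>n. fst (pf \<beta>) n + snd (snd (pf \<beta>)) * x n)" ..
    define dd where "dd = (\<lambda>\<beta>. fst (pf \<beta>))"
    define bb where "bb = (\<lambda>\<beta>. fst (snd (pf \<beta>)))"
    define cc where "cc = (\<lambda>\<beta>. snd (snd (pf \<beta>)))"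
    have P1: "\<And>\<beta>. \<beta> \<in> E \<Longrightarrow> (dd \<beta>, bb \<beta>) \<in> G" using pf unfolding dd_def bb_def by blast
    have P2: "\<And>\<beta>. \<beta> \<in> E \<Longrightarrow> lin S \<beta> = (\<lambda>n. dd \<beta> n + cc \<beta> * x n)" using pf unfolding dd_def cc_def by blast
    define gf where "gf = (\<lambda>\<beta> y. rs S \<beta> y - (if y = x then cc \<beta> else 0))"
    have lg: "\<And>\<beta>. \<beta> \<in> E \<Longrightarrow> lin (insert x S) (gf \<beta>) = dd \<beta>"
    proof
      fix \<beta> n assume b: "\<beta> \<in> E"
      have "lin (insert x S) (gf \<beta>) n = (\<Sum>y\<in>S. \<beta> y * y n) - cc \<beta> * x n"
        unfolding lin_def gf_def by (rule sum_gam[OF S])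
      also have "\<dots> = lin S \<beta> n - cc \<beta> * x n" unfolding lin_def by simp
      also have "\<dots> = dd \<beta> n" using P2[OF b] by simp
      finally show "lin (insert x S) (gf \<beta>) n = dd \<beta> n" .
    qed
    have admE: "adm (insert x S) (gf ` E)"
      unfolding adm_def
    proof (intro conjI ballI)
      show "finite (insert x S)" using S by simp
      show "x \<in> insert x S" by simp
      show "finite (gf ` E)" using E by simp
      fix \<gamma> assume "\<gamma> \<in> gf ` E"
      then obtain \<beta> where b: "\<beta> \<in> E" "\<gamma> = gf \<beta>" by (elim imageE)
      have "(lin (insert x S) \<gamma>, bb \<beta>) \<in> G" using lg[OF b(1)] P1[OF b(1)] b(2) by simp
      then show "lin (insert x S) \<gamma> \<in> Domain G" by (rule DomainI)
    qed
    from vC[OF admE, of i] obtain w where w: "w x = v"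
      "\<forall>\<gamma>\<in>gf ` E. \<forall>a. (lin (insert x S) \<gamma>, a) \<in> G \<longrightarrow> a - (\<Sum>y\<in>insert x S. \<gamma> y * w y) \<in> ideal_pow M i"
      unfolding Cs_def by blast
    show "\<exists>w. \<forall>\<beta>\<in>E. \<forall>a. (lin S \<beta>, a) \<in> G' \<longrightarrow> a - (\<Sum>y\<in>S. \<beta> y * w y) \<in> ideal_pow M i"
    proof (intro exI ballI allI impI)
      fix \<beta> a assume b: "\<beta> \<in> E" and a: "(lin S \<beta>, a) \<in> G'"
      have "(lin S \<beta>, bb \<beta> + cc \<beta> * v) \<in> G'" unfolding P2[OF b] by (rule G'I[OF P1[OF b]])
      then have aeq: "a = bb \<beta> + cc \<beta> * v" using fG' a unfolding funct_def by blast
      have "gf \<beta> \<in> gf ` E" using b by simp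
      moreover have "(lin (insert x S) (gf \<beta>), bb \<beta>) \<in> G" using lg[OF b] P1[OF b] by simp
      ultimately have h: "bb \<beta> - (\<Sum>y\<in>insert x S. gf \<beta> y * w y) \<in> ideal_pow M i" using w(2) by blast
      have "(\<Sum>y\<in>insert x S. gf \<beta> y * w y) = (\<Sum>y\<in>S. \<beta> y * w y) - cc \<beta> * w x"
        unfolding gf_def by (rule sum_gam[OF S])
      then have "a - (\<Sum>y\<in>S. \<beta> y * w y) = bb \<beta> - (\<Sum>y\<in>insert x S. gf \<beta> y * w y)"
        using aeq w(1) by (simp add: algebra_simps)
      then show "a - (\<Sum>y\<in>S. \<beta> y * w y) \<in> ideal_pow M i" using h by simp
    qed
  qed
  have "good G'" unfolding good_def using fG' cG' GG' G0G iG' by blast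
  then show ?thesis using GG' xD by blast
qed

end



context sp begin

lemma max_exists: "\<exists>G. good G \<and> Domain G = UNIV"
proof -
  have "\<forall>C\<in>chains {G. good G}. \<exists>U\<in>{G. good G}. \<forall>X\<in>C. X \<subseteq> U"
  proof
    fix C assume C: "C \<in> chains {G. good G}"
    show "\<exists>U\<in>{G. good G}. \<forall>X\<in>C. X \<subseteq> U"
    proof (cases "C = {}")
      case True
      show ?thesis
      proof (rule bexI[of _ G0])
        show "G0 \<in> {G. good G}" using G0_good by simp
        show "\<forall>X\<in>C. X \<subseteq> G0" using True by simp
      qed
    next
      case False
      show ?thesis
      proof (rule bexI[of _ "\<Union>C"])
        show "\<Union>C \<in> {G. good G}" using union_good[OF C False] by simp
        show "\<forall>X\<in>C. X \<subseteq> \<Union>C" by auto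
      qed
    qed
  qed
  from Zorn_Lemma2[OF this] obtain Gm where Gm1: "Gm \<in> {G. good G}"
    and Gm2: "\<forall>X\<in>{G. good G}. Gm \<subseteq> X \<longrightarrow> X = Gm" ..
  have gm: "good Gm" using Gm1 by simp
  have "\<forall>x. x \<in> Domain Gm"
  proof
    fix x show "x \<in> Domain Gm"
    proof (rule ccontr)
      assume "x \<notin> Domain Gm"
      from extend[OF gm this] obtain G' where G': "good G'" "Gm \<subseteq> G'" "x \<in> Domain G'" by (elim exE conjE)
      have "G' \<in> {G. good G}" using G'(1) by simp
      then have "G' = Gm" using Gm2 G'(2) by simp
      then show False using G'(3) \<open>x \<notin> Domain Gm\<close> by simp
    qed
  qed
  then have "Domain Gm = UNIV" by auto
  then show ?thesis using gm by blast
qed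

lemma main: "\<exists>\<phi> :: (nat \<Rightarrow> 'a) \<Rightarrow> 'a.
            (\<forall>x y. \<phi> (\<lambda>n. x n + y n) = \<phi> x + \<phi> y) \<and>
            (\<forall>a x. \<phi> (\<lambda>n. a * x n) = a * \<phi> x) \<and>
            (\<forall>x. (\<forall>\<^sub>F n in sequentially. x n \<in> I n) \<longrightarrow> \<phi> x = 0) \<and>
            (\<forall>a. \<phi> (\<lambda>n. a) = a)"
proof -
  from max_exists obtain Gm where gm: "good Gm" and D: "Domain Gm = UNIV" by (elim exE conjE)
  have fG: "\<And>z a b. (z, a) \<in> Gm \<Longrightarrow> (z, b) \<in> Gm \<Longrightarrow> a = b" using gm unfolding good_def funct_def by blast
  have addG: "\<And>z a z' a'. (z, a) \<in> Gm \<Longrightarrow> (z', a') \<in> Gm \<Longrightarrow> ((\<lambda>n. z n + z' n), a + a') \<in> Gm"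
    using gm unfolding good_def closed_def by blast
  have mulG: "\<And>r z a. (z, a) \<in> Gm \<Longrightarrow> ((\<lambda>n. r * z n), r * a) \<in> Gm"
    using gm unfolding good_def closed_def by blast
  have G0G: "G0 \<subseteq> Gm" using gm unfolding good_def by simp
  define \<phi> where "\<phi> = (\<lambda>z. THE a. (z, a) \<in> Gm)"
  have ph: "\<And>z. (z, \<phi> z) \<in> Gm"
  proof -
    fix z
    have "z \<in> Domain Gm" using D by simp
    then obtain a where a: "(z, a) \<in> Gm" by (rule DomainE)
    have "\<exists>!a. (z, a) \<in> Gm" using a fG by blast
    then show "(z, \<phi> z) \<in> Gm" unfolding \<phi>_def by (rule theI')
  qed
  have phu: "\<And>z a. (z, a) \<in> Gm \<Longrightarrow> \<phi> z = a" using ph fG by blast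
  show ?thesis
  proof (rule exI[of _ \<phi>], intro conjI allI impI)
    fix x y :: "nat \<Rightarrow> 'a"
    show "\<phi> (\<lambda>n. x n + y n) = \<phi> x + \<phi> y" by (rule phu[OF addG[OF ph ph]])
  next
    fix a and x :: "nat \<Rightarrow> 'a"
    show "\<phi> (\<lambda>n. a * x n) = a * \<phi> x" by (rule phu[OF mulG[OF ph]])
  next
    fix x :: "nat \<Rightarrow> 'a" assume "\<forall>\<^sub>F n in sequentially. x n \<in> I n"
    then have "(\<lambda>n. x n - 0) \<in> K" unfolding K_def by simp
    then have "(x, 0) \<in> G0" by (simp only: G0_mem)
    then show "\<phi> x = 0" using G0G phu by blast
  next
    fix a :: 'a
    have "(\<lambda>n. (\<lambda>n. a) n - a) \<in> K" unfolding K_def using ideal_0[OF Iid] by simp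
    then have "((\<lambda>n. a), a) \<in> G0" by (simp only: G0_mem)
    then show "\<phi> (\<lambda>n. a) = a" using G0G phu by blast
  qed
qed

end

theorem proposition2p3:
  fixes M :: "'a::idom set" and I :: "nat \<Rightarrow> 'a set"
  assumes noeth: "noetherian_ring TYPE('a)"
    and loc: "local_ring_max M"
    and compl: "adically_complete M"
    and normal: "normal_domain TYPE('a)"
    and prime: "\<And>n. prime_ideal (I n)"
    and nonzero: "\<And>n. I n \<noteq> {0}"
    and lim: "\<And>i. i \<ge> 1 \<Longrightarrow> \<exists>N. \<forall>n\<ge>N. I n \<subseteq> ideal_pow M i"
  shows "(\<forall>a. (\<forall>\<^sub>F n in sequentially. a \<in> I n) \<longrightarrow> a = 0) \<and>
         (\<exists>\<phi> :: (nat \<Rightarrow> 'a) \<Rightarrow> 'a.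
            (\<forall>x y. \<phi> (\<lambda>n. x n + y n) = \<phi> x + \<phi> y) \<and>
            (\<forall>a x. \<phi> (\<lambda>n. a * x n) = a * \<phi> x) \<and>
            (\<forall>x. (\<forall>\<^sub>F n in sequentially. x n \<in> I n) \<longrightarrow> \<phi> x = 0) \<and>
            (\<forall>a. \<phi> (\<lambda>n. a) = a))"
proof -
  have Iid: "\<And>n. is_ideal (I n)" using prime unfolding prime_ideal_def by blast
  interpret sp M I
    by (unfold_locales) (fact noeth loc compl Iid lim)+
  show ?thesis using conj1 main by blast
qed


end
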